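(* Let $s_0\in(0,1)$, $\tau,\eta,\lambda>0$, and let $(I_j^0)_{j\in\mathbb{Z}}$ be a finitely supported sequence with $I_j^0\in[0,1)$ for all $j$ and $I_j^0>0$ for at least one $j$. Let $f(v):=s_0(1-e^{-\tau v})-\eta v$, $\mathscr{R}_0:=s_0\tau/\eta$, and assume $\mathscr{R}_0>1$. Define $$c_*:=\min_{\gamma>0}\frac{\eta(\mathscr{R}_0-1)+\lambda(e^{-\gamma}-2+e^{\gamma})}{\gamma}>0.$$ Let $(\mathcal{I}_j^\infty)_{j\in\mathbb{Z}}$ be the unique positive bounded solution of $0=f(\mathcal{I}_j)+I_j^0+\lambda(\mathcal{I}_{j-1}-2\mathcal{I}_j+\mathcal{I}_{j+1})$, $j\in\mathbb{Z}$, and let $(\mathcal{I}_j(t))_{j\in\mathbb{Z}}$ solve $$\mathcal{I}_j'(t)=f(\mathcal{I}_j(t))+I_j^0+\lambda\left(\mathcal{I}_{j-1}(t)-2\mathcal{I}_j(t)+\mathcal{I}_{j+1}(t)\right),\quad j\in\mathbb{Z},\ t>0,\qquad \mathcal{I}_j(0)=0\ \ \forall j\in\mathbb{Z}.$$ Then: (i) for every $c\in(0,c_* )$, $\limsup_{t\to+\infty}\sup_{|j|\le ct}|\mathcal{I}_j(t)-\mathcal{I}_j^\infty|=0$; (ii) for every $c>c_*$, $\limsup_{t\to+\infty}\sup_{|j|\ge ct}|\mathcal{I}_j(t)|=0$. *)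

theory Defs
  imports "HOL-Analysis.Analysis"
begin

definition epi_f :: "real \<Rightarrow> real \<Rightarrow> real \<Rightarrow> real \<Rightarrow> real" where
  "epi_f s0 \<tau> \<eta> v = s0 * (1 - exp (- \<tau> * v)) - \<eta> * v"

definition R0 :: "real \<Rightarrow> real \<Rightarrow> real \<Rightarrow> real" where
  "R0 s0 \<tau> \<eta> = s0 * \<tau> / \<eta>"

text \<open>Spreading speed c_* = min over gamma > 0 (the minimum is attained; we write the infimum).\<close>
definition c_star :: "real \<Rightarrow> real \<Rightarrow> real \<Rightarrow> real \<Rightarrow> real" where
  "c_star s0 \<tau> \<eta> lam =
     (INF \<gamma>\<in>{0<..}. (\<eta> * (R0 s0 \<tau> \<eta> - 1) + lam * (exp (-\<gamma>) - 2 + exp \<gamma>)) / \<gamma>)"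

definition dlap :: "(int \<Rightarrow> real) \<Rightarrow> int \<Rightarrow> real" where
  "dlap u j = u (j - 1) - 2 * u j + u (j + 1)"

end

theory Submission
  imports Defs
begin

lemma last_nonpos:
  fixes g :: "real \<Rightarrow> real"
  assumes cont: "continuous_on {s..t} g" and st: "s \<le> t" and gs: "g s \<le> 0" and gt: "g t > 0"
  shows "\<exists>u. s \<le> u \<and> u < t \<and> g u \<le> 0 \<and> (\<forall>v. u < v \<and> v \<le> t \<longrightarrow> g v > 0)"
proof -
  define A where "A = {s..t} \<inter> g -` {..0}"
  have clA: "closed A" unfolding A_def
    by (rule continuous_closed_preimage[OF cont]) auto
  have neA: "A \<noteq> {}" using st gs unfolding A_def by auto
  have bdA: "bdd_above A" unfolding A_def by (auto intro: bdd_aboveI[where M=t])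
  have uA: "Sup A \<in> A" by (rule closed_contains_Sup[OF neA bdA clA])
  have "s \<le> Sup A" using bdA st gs by (auto intro!: cSup_upper simp: A_def)
  moreover have "Sup A < t" using uA gt unfolding A_def
    by (metis Int_iff atLeastAtMost_iff atMost_iff order_le_less vimage_eq not_le)
  moreover have "g (Sup A) \<le> 0" using uA unfolding A_def by auto
  moreover have "\<forall>v. Sup A < v \<and> v \<le> t \<longrightarrow> g v > 0"
  proof (intro allI impI)
    fix v assume v: "Sup A < v \<and> v \<le> t"
    show "g v > 0"
    proof (rule ccontr)
      assume "\<not> g v > 0"
      hence "v \<in> A" using v \<open>s \<le> Sup A\<close> unfolding A_def by auto
      hence "v \<le> Sup A" using bdA by (rule cSup_upper)
      thus False using v by auto
    qed
  qed
  ultimately show ?thesis by blast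
qed

lemma cmp_step:
  fixes w :: "real \<Rightarrow> int \<Rightarrow> real"
  assumes L: "0 \<le> L" and mu: "0 \<le> \<mu>" and hdef: "h = 1 / (2 * (L + 2 * \<mu> + 1))"
  and cont: "\<And>j. continuous_on {ta..tb} (\<lambda>t. w t j)"
  and bdd: "\<And>j t. ta \<le> t \<Longrightarrow> t \<le> tb \<Longrightarrow> w t j \<le> M"
  and der: "\<And>j t. ta < t \<Longrightarrow> t \<le> tb \<Longrightarrow> 0 < w t j \<Longrightarrow> \<exists>d. ((\<lambda>s. w s j) has_real_derivative d) (at t)
           \<and> d \<le> L * w t j + \<mu> * (max 0 (w t (j-1)) + max 0 (w t (j+1)))"
  and s: "ta \<le> s" "s \<le> tb"
  and prev: "\<And>j t. ta \<le> t \<Longrightarrow> t \<le> s \<Longrightarrow> w t j \<le> 0"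
  shows "\<And>j t. ta \<le> t \<Longrightarrow> t \<le> min tb (s + h) \<Longrightarrow> w t j \<le> 0"
proof -
  define s' where "s' = min tb (s + h)"
  define C where "C = L + 2 * \<mu> + 1"
  have C1: "C \<ge> 1" using L mu unfolding C_def by auto
  have h0: "h > 0" using hdef C1 unfolding C_def by auto
  have hC: "h * C = 1/2" using hdef C1 unfolding C_def by auto
  define Q where "Q S \<longleftrightarrow> (\<forall>k t. s \<le> t \<and> t \<le> s' \<longrightarrow> w t k \<le> S)" for S
  have halve: "Q (S/2)" if S0: "S \<ge> 0" and QS: "Q S" for S
  proof -
    { fix k t assume t: "s \<le> t" "t \<le> s'"
      have "w t k \<le> S/2"
      proof (cases "w t k \<le> 0")
        case True thus ?thesis using S0 by auto
      next
        case False
        hence wpos: "w t k > 0" by auto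
        have ws: "w s k \<le> 0" using prev s by auto
        have ts1: "t \<le> tb" using t unfolding s'_def by auto
        have contst: "continuous_on {s..t} (\<lambda>t. w t k)"
          by (rule continuous_on_subset[OF cont]) (use s ts1 in auto)
        obtain u where u: "s \<le> u" "u < t" "w u k \<le> 0" "\<forall>v. u < v \<and> v \<le> t \<longrightarrow> w v k > 0"
          using last_nonpos[OF contst t(1) ws wpos] by blast
        have contut: "continuous_on {u..t} (\<lambda>t. w t k)"
          by (rule continuous_on_subset[OF contst]) (use u in auto)
        have dif: "(\<lambda>t. w t k) differentiable at x" if "u < x" "x < t" for x
        proof -
          have "0 < w x k" using u(4) that by auto
          moreover have "ta < x" "x \<le> tb" using that u s ts1 by auto
          ultimately obtain d where "((\<lambda>s. w s k) has_real_derivative d) (at x)"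
            using der[of x k] by blast
          thus ?thesis using real_differentiable_def by blast
        qed
        obtain l z where z: "u < z" "z < t" "((\<lambda>t. w t k) has_real_derivative l) (at z)"
            "w t k - w u k = (t - u) * l"
          using MVT[OF u(2) contut dif] by blast
        have wz: "0 < w z k" using u(4) z by auto
        obtain d where d: "((\<lambda>s. w s k) has_real_derivative d) (at z)"
             "d \<le> L * w z k + \<mu> * (max 0 (w z (k-1)) + max 0 (w z (k+1)))"
          using der[of z k] wz z u s ts1 by (meson le_less_trans less_eq_real_def order_trans)
        have ld: "l = d" using DERIV_unique[OF z(3) d(1)] .
        have zr: "s \<le> z" "z \<le> s'" using z u t by auto
        have b1: "w z k \<le> S" "max 0 (w z (k-1)) \<le> S" "max 0 (w z (k+1)) \<le> S"
          using QS zr S0 unfolding Q_def by auto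
        have "d \<le> L * S + \<mu> * (S + S)"
          using d(2) b1 L mu by (smt (verit) mult_left_mono add_mono)
        also have "\<dots> \<le> C * S" unfolding C_def using S0 by (simp add: algebra_simps)
        finally have dC: "d \<le> C * S" .
        have tu: "0 \<le> t - u" "t - u \<le> h" using u t unfolding s'_def by auto
        have "w t k \<le> (t - u) * d" using z(4) ld u(3) by auto
        also have "\<dots> \<le> h * (C * S)"
        proof -
          have "(t - u) * d \<le> (t - u) * (C * S)" using dC tu by (simp add: mult_left_mono)
          also have "\<dots> \<le> h * (C * S)" using tu S0 C1 by (simp add: mult_right_mono)
          finally show ?thesis .
        qed
        also have "\<dots> = S/2" using hC by (simp add: algebra_simps)
        finally show ?thesis .
      qed }
    thus ?thesis unfolding Q_def by auto
  qed
  define M' where "M' = max M 0"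
  have QM: "Q M'"
  proof -
    { fix k t assume "s \<le> t" "t \<le> s'"
      hence "ta \<le> t" "t \<le> tb" using s unfolding s'_def by auto
      hence "w t k \<le> M'" using bdd[of t k] unfolding M'_def by auto }
    thus ?thesis unfolding Q_def by auto
  qed
  have Qn: "Q (M' / 2^n)" for n
  proof (induction n)
    case 0 thus ?case using QM by simp
  next
    case (Suc n)
    have "Q (M'/2^n / 2)" by (rule halve) (use Suc M'_def in auto)
    thus ?case by (simp add: field_simps)
  qed
  fix j t assume t: "ta \<le> t" "t \<le> min tb (s + h)"
  show "w t j \<le> 0"
  proof (cases "t \<le> s")
    case True thus ?thesis using prev t by auto
  next
    case False
    show ?thesis
    proof (rule ccontr)
      assume "\<not> w t j \<le> 0"
      hence wp: "w t j > 0" by auto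
      have M'0: "M' \<ge> 0" unfolding M'_def by auto
      obtain n where n: "(1/2::real)^n < w t j / (M' + 1)"
        using real_arch_pow_inv[of "w t j / (M'+1)" "1/2"] wp M'0 by auto
      have "w t j \<le> M' / 2^n" using Qn[of n] t False unfolding Q_def s'_def by auto
      also have "\<dots> \<le> (M' + 1) * (1/2)^n" by (simp add: field_simps)
      also have "\<dots> < (M'+1) * (w t j / (M' + 1))" using n M'0 by (intro mult_strict_left_mono) auto
      also have "\<dots> = w t j" using M'0 by auto
      finally show False by simp
    qed
  qed
qed

lemma cmp_core:
  fixes w :: "real \<Rightarrow> int \<Rightarrow> real"
  assumes L: "0 \<le> L" and mu: "0 \<le> \<mu>"
  and cont: "\<And>j. continuous_on {ta..tb} (\<lambda>t. w t j)"
  and init: "\<And>j. w ta j \<le> 0"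
  and bdd: "\<And>j t. ta \<le> t \<Longrightarrow> t \<le> tb \<Longrightarrow> w t j \<le> M"
  and der: "\<And>j t. ta < t \<Longrightarrow> t \<le> tb \<Longrightarrow> 0 < w t j \<Longrightarrow> \<exists>d. ((\<lambda>s. w s j) has_real_derivative d) (at t)
           \<and> d \<le> L * w t j + \<mu> * (max 0 (w t (j-1)) + max 0 (w t (j+1)))"
  and t: "ta \<le> t" "t \<le> tb"
  shows "w t j \<le> 0"
proof -
  define h where "h = 1 / (2 * (L + 2 * \<mu> + 1))"
  have h0: "h > 0" using L mu unfolding h_def by auto
  have P: "\<forall>j t. ta \<le> t \<and> t \<le> min tb (ta + real n * h) \<longrightarrow> w t j \<le> 0" for n
  proof (induction n)
    case 0 thus ?case using init by auto
  next
    case (Suc n)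
    define s where "s = min tb (ta + real n * h)"
    have s: "ta \<le> s" "s \<le> tb" using t h0 unfolding s_def by auto
    have eq: "min tb (s + h) = min tb (ta + real (Suc n) * h)"
      using h0 unfolding s_def by (auto simp: min_def algebra_simps)
    have "w t j \<le> 0" if "ta \<le> t" "t \<le> min tb (s + h)" for t j
      by (rule cmp_step[of L \<mu> h ta tb w M s, OF L mu h_def cont bdd der s])
         (use Suc that in \<open>auto simp: s_def\<close>)
    thus ?case unfolding eq by blast
  qed
  obtain n where n: "(tb - ta) / h < real n" using reals_Archimedean2 by blast
  have "tb - ta \<le> real n * h" using n h0 by (simp add: field_simps)
  hence "t \<le> min tb (ta + real n * h)" using t by auto
  thus ?thesis using P t by auto
qed


lemma exp_gt_lin: "y \<noteq> 0 \<Longrightarrow> 1 + y < exp (y::real)"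
proof -
  assume y: "y \<noteq> 0"
  show ?thesis
  proof (cases "1 + y/2 < 0")
    case True
    hence "1 + y < 0" by auto
    thus ?thesis using exp_gt_zero[of y] by linarith
  next
    case False
    have "(1 + y/2)^2 \<le> exp (y/2) ^ 2"
      using False exp_ge_add_one_self[of "y/2"] by (intro power_mono) auto
    also have "exp (y/2) ^ 2 = exp y" by (simp add: exp_double[symmetric])
    finally have "1 + y + y^2/4 \<le> exp y" by (simp add: power2_eq_square field_simps)
    moreover have "y^2/4 > 0" using y by auto
    ultimately show ?thesis by linarith
  qed
qed

lemma exp_strict_conv:
  fixes x \<theta> :: real
  assumes "0 < \<theta>" "\<theta> < 1" "x > 0"
  shows "exp (- \<theta> * x) < \<theta> * exp (- x) + (1 - \<theta>)"
proof -
  define p where "p = - \<theta> * x"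
  have p0: "p \<noteq> 0" "-x - p \<noteq> 0" using assms unfolding p_def by auto
  have "exp p * (1 + (-x - p)) < exp p * exp (-x - p)"
    using exp_gt_lin[OF p0(2)] by (intro mult_strict_left_mono) auto
  also have "exp p * exp (-x - p) = exp (-x)" by (simp add: exp_add[symmetric])
  finally have a: "exp p * (1 + (-x - p)) < exp (-x)" .
  have "exp p * (1 + (0 - p)) < exp p * exp (0 - p)"
    using exp_gt_lin[of "-p"] p0(1) by (intro mult_strict_left_mono) auto
  also have "exp p * exp (0 - p) = exp 0" by (simp add: exp_add[symmetric])
  finally have b: "exp p * (1 + (0 - p)) < exp 0" .
  have "\<theta> * (exp p * (1 + (-x - p))) + (1-\<theta>) * (exp p * (1 + (0 - p))) < \<theta> * exp (-x) + (1-\<theta>) * exp 0"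
    using a b assms by (intro add_strict_mono mult_strict_left_mono) auto
  moreover have "\<theta> * (exp p * (1 + (-x - p))) + (1-\<theta>) * (exp p * (1 + (0 - p))) = exp p"
    unfolding p_def by (simp add: algebra_simps)
  ultimately show ?thesis unfolding p_def by simp
qed

lemma exp_quad_bound:
  fixes x :: real assumes "0 \<le> x" shows "exp (-x) \<le> 1 - x + x^2/2"
proof -
  have "(\<lambda>x. 1 - x + x^2/2 - exp (-x)) 0 \<le> (\<lambda>x. 1 - x + x^2/2 - exp (-x)) x"
  proof (rule DERIV_nonneg_imp_nondecreasing[OF assms])
    fix y :: real assume "0 \<le> y" "y \<le> x"
    have "DERIV (\<lambda>x. 1 - x + x^2/2 - exp (-x)) y :> (-1 + y + exp (-y))"
      by (auto intro!: derivative_eq_intros)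
    moreover have "-1 + y + exp (-y) \<ge> 0" using exp_ge_add_one_self[of "-y"] by linarith
    ultimately show "\<exists>d. DERIV (\<lambda>x. 1 - x + x^2/2 - exp (-x)) y :> d \<and> d \<ge> 0" by blast
  qed
  thus ?thesis by simp
qed

locale epi =
  fixes s0 \<tau> \<eta> lam :: real
    and I0 :: "int \<Rightarrow> real"
    and Iinf :: "int \<Rightarrow> real"
    and I :: "real \<Rightarrow> int \<Rightarrow> real"
  assumes s0: "0 < s0" "s0 < 1"
    and pos: "0 < \<tau>" "0 < \<eta>" "0 < lam"
    and I0_fin: "finite {j. I0 j \<noteq> 0}"
    and I0_range: "\<And>j. 0 \<le> I0 j \<and> I0 j < 1"
    and I0_nz: "\<exists>j. 0 < I0 j"
    and R0_gt: "R0 s0 \<tau> \<eta> > 1"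
    and Iinf_pos: "\<And>j. 0 < Iinf j"
    and Iinf_bdd: "bounded (range Iinf)"
    and Iinf_eq: "\<And>j. 0 = epi_f s0 \<tau> \<eta> (Iinf j) + I0 j + lam * dlap Iinf j"
    and I_cont: "\<And>j. continuous_on {0..} (\<lambda>t. I t j)"
    and I_ode: "\<And>j t. t > 0 \<Longrightarrow>
        ((\<lambda>s. I s j) has_real_derivative
           (epi_f s0 \<tau> \<eta> (I t j) + I0 j + lam * dlap (I t) j)) (at t)"
    and I_init: "\<And>j. I 0 j = 0"
    and I_bdd: "\<And>T. bounded {I t j |t j. 0 \<le> t \<and> t \<le> T}"
begin

abbreviation f where "f \<equiv> epi_f s0 \<tau> \<eta>"
definition r where "r = s0 * \<tau> - \<eta>"

lemma r_pos: "r > 0"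
proof -
  have "s0 * \<tau> / \<eta> > 1" using R0_gt unfolding R0_def .
  thus ?thesis using pos unfolding r_def by (simp add: field_simps)
qed

lemma r_R0: "\<eta> * (R0 s0 \<tau> \<eta> - 1) = r"
  unfolding R0_def r_def using pos by (simp add: field_simps)

lemma f_cont: "continuous_on S f"
  unfolding epi_f_def[abs_def] by (intro continuous_intros)

lemma f_0: "f 0 = 0" unfolding epi_f_def by simp

lemma f_lip: assumes "0 \<le> b" "b \<le> a" shows "f a - f b \<le> r * (a - b)"
proof -
  have e: "exp (- \<tau> * a) = exp (- \<tau> * b) * exp (- (\<tau> * (a - b)))"
    by (simp add: exp_add[symmetric] algebra_simps)
  have e1: "exp (- \<tau> * b) \<le> 1" using assms pos by auto
  have e2: "1 - exp (- (\<tau> * (a - b))) \<le> \<tau> * (a - b)" using exp_ge_add_one_self[of "- (\<tau> * (a - b))"] by linarith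
  have e3: "0 \<le> 1 - exp (- (\<tau> * (a - b)))" using assms pos by auto
  have "exp (- \<tau> * b) - exp (- \<tau> * a) = exp (- \<tau> * b) * (1 - exp (- (\<tau> * (a - b))))"
    unfolding e by (simp add: algebra_simps)
  also have "\<dots> \<le> 1 * (\<tau> * (a - b))" using e1 e2 e3 by (intro mult_mono) auto
  finally have "exp (- \<tau> * b) - exp (- \<tau> * a) \<le> \<tau> * (a - b)" by simp
  hence "s0 * (exp (- \<tau> * b) - exp (- \<tau> * a)) \<le> s0 * (\<tau> * (a - b))" using s0 by (intro mult_left_mono) auto
  thus ?thesis unfolding epi_f_def r_def by (simp add: algebra_simps)
qed

lemma f_ge_neg: assumes "0 \<le> v" shows "f v \<ge> - \<eta> * v"
proof -
  have "exp (- \<tau> * v) \<le> 1" using assms pos by auto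
  hence "0 \<le> s0 * (1 - exp (- \<tau> * v))" using s0 by auto
  thus ?thesis unfolding epi_f_def by simp
qed

lemma f_neg_bound: assumes "v \<le> 0" "- B \<le> v" shows "- f v \<le> s0 * \<tau> * exp (\<tau> * B) * (- v)"
proof -
  define x where "x = - \<tau> * v"
  have "\<tau> * v \<le> 0" using assms pos by (intro mult_nonneg_nonpos) auto
  hence x0: "0 \<le> x" unfolding x_def by simp
  have "1 - x \<le> exp (- x)" using exp_ge_add_one_self[of "-x"] by simp
  hence "exp x * (1 - x) \<le> exp x * exp (-x)" by (intro mult_left_mono) auto
  hence ex: "exp x - 1 \<le> x * exp x" by (simp add: exp_minus algebra_simps)
  have "\<tau> * (- v) \<le> \<tau> * B" using assms pos by (intro mult_left_mono) auto
  hence xB: "x \<le> \<tau> * B" unfolding x_def by simp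
  have "x * exp x \<le> x * exp (\<tau> * B)" using xB x0 by (intro mult_left_mono) auto
  with ex have "exp x - 1 \<le> x * exp (\<tau> * B)" by linarith
  hence "s0 * (exp x - 1) \<le> s0 * (x * exp (\<tau> * B))" using s0 by (intro mult_left_mono) auto
  moreover have "- f v = s0 * (exp x - 1) + \<eta> * v" unfolding epi_f_def x_def by (simp add: algebra_simps)
  moreover have "\<eta> * v \<le> 0" using assms pos by (intro mult_nonneg_nonpos) auto
  ultimately show ?thesis unfolding x_def by (simp add: algebra_simps)
qed

lemma f_quad: assumes "0 \<le> v" shows "f v \<ge> r * v - s0 * \<tau>^2 * v^2 / 2"
proof -
  have "exp (- (\<tau> * v)) \<le> 1 - \<tau> * v + (\<tau> * v)^2/2" using exp_quad_bound[of "\<tau> * v"] assms pos by auto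
  hence "s0 * (1 - exp (- (\<tau> * v))) \<ge> s0 * (\<tau> * v - (\<tau> * v)^2/2)" using s0 by (intro mult_left_mono) auto
  thus ?thesis unfolding epi_f_def r_def by (simp add: algebra_simps power2_eq_square)
qed

lemma f_small: assumes "r' < r" shows "\<exists>\<delta>>0. \<forall>v. 0 \<le> v \<and> v \<le> \<delta> \<longrightarrow> f v \<ge> r' * v"
proof -
  define \<delta> where "\<delta> = (r - r') / (s0 * \<tau>^2)"
  have d0: "\<delta> > 0" using assms s0 pos unfolding \<delta>_def by auto
  { fix v assume v: "0 \<le> v" "v \<le> \<delta>"
    have "v^2 \<le> \<delta> * v" using v by (simp add: power2_eq_square mult_right_mono)
    moreover have "0 \<le> v^2" by simp
    ultimately have "v^2 / 2 \<le> \<delta> * v" by linarith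
    hence "s0 * \<tau>^2 * (v^2 / 2) \<le> s0 * \<tau>^2 * (\<delta> * v)"
      using s0 pos by (intro mult_left_mono) auto
    hence "s0 * \<tau>^2 * v^2 / 2 \<le> s0 * \<tau>^2 * (\<delta> * v)" by simp
    also have "\<dots> = (r - r') * v" unfolding \<delta>_def using s0 pos by (simp add: field_simps)
    finally have "f v \<ge> r' * v" using f_quad[OF v(1)] by (simp add: algebra_simps) }
  thus ?thesis using d0 by blast
qed

lemma f_conc: assumes "0 < \<theta>" "\<theta> < 1" "0 < v" shows "f (\<theta> * v) > \<theta> * f v"
proof -
  have "exp (- \<theta> * (\<tau> * v)) < \<theta> * exp (- (\<tau> * v)) + (1 - \<theta>)"
    using exp_strict_conv[of \<theta> "\<tau> * v"] assms pos by auto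
  hence "s0 * (1 - exp (- \<theta> * (\<tau> * v))) > s0 * (\<theta> * (1 - exp (- (\<tau> * v))))" using s0
    by (intro mult_strict_left_mono) (auto simp: algebra_simps)
  thus ?thesis unfolding epi_f_def by (simp add: algebra_simps)
qed

lemma f_ratio_mono: assumes "0 < y" "y < z" shows "f y / y > f z / z"
proof -
  have "f ((y/z) * z) > (y/z) * f z" using assms by (intro f_conc) auto
  hence "f y > (y/z) * f z" using assms by simp
  thus ?thesis using assms by (simp add: field_simps)
qed

lemma vstar_ex: "\<exists>v. v > 0 \<and> f v = 0"
proof -
  obtain \<delta> where d: "\<delta> > 0" "\<forall>v. 0 \<le> v \<and> v \<le> \<delta> \<longrightarrow> f v \<ge> (r/2) * v"
    using f_small[of "r/2"] r_pos by auto
  have "(r/2) * \<delta> > 0" using r_pos d by simp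
  moreover have "f \<delta> \<ge> (r/2) * \<delta>" using d by auto
  ultimately have fd: "f \<delta> > 0" by linarith
  define B where "B = max (2 * \<delta>) (2 * s0 / \<eta>)"
  have B: "\<delta> < B" "s0 / \<eta> < B" using d s0 pos unfolding B_def by auto
  have "f B \<le> s0 - \<eta> * B" unfolding epi_f_def using s0 pos by (simp add: algebra_simps)
  moreover have "\<eta> * B > s0" using B pos by (simp add: field_simps)
  ultimately have fB: "f B < 0" by auto
  obtain v where v: "v \<ge> \<delta>" "v \<le> B" "f v = 0"
    using IVT2'[of f B 0 \<delta>] fd fB B f_cont by auto
  thus ?thesis using d by (intro exI[of _ v]) auto
qed

definition vs where "vs = (SOME v. v > 0 \<and> f v = 0)"

lemma vs: "vs > 0" "f vs = 0"
  using someI_ex[OF vstar_ex] unfolding vs_def by auto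

lemma f_pos_below: assumes "0 < y" "y < vs" shows "f y / y > 0"
  using f_ratio_mono[OF assms] vs by simp

lemma f_ratio_ge: assumes "0 < y" "y \<le> V" shows "f y / y \<ge> f V / V"
  using f_ratio_mono[of y V] assms by (cases "y = V") auto

lemma f_neg_above: assumes "vs < y" shows "f y < 0"
proof -
  have "f vs / vs > f y / y" using f_ratio_mono[of vs y] assms vs by auto
  hence "f y / y < 0" using vs by simp
  thus ?thesis using assms vs by (simp add: divide_less_0_iff)
qed

lemma f_neg_unif: assumes "0 < e" shows "\<exists>m>0. \<forall>y. vs + e \<le> y \<longrightarrow> f y \<le> - m"
proof -
  define z where "z = vs + e"
  have fz: "f z < 0" using f_neg_above assms unfolding z_def by auto
  have z0: "z > 0" using vs assms unfolding z_def by auto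
  { fix y assume y: "z \<le> y"
    have "f y / y \<le> f z / z" using f_ratio_ge[of z y] y z0 by auto
    hence "f y \<le> y * (f z / z)" using y z0 by (simp add: field_simps)
    also have "\<dots> \<le> z * (f z / z)" using y fz z0 by (intro mult_right_mono_neg) (auto simp: divide_le_0_iff)
    also have "\<dots> = f z" using z0 by simp
    finally have "f y \<le> f z" . }
  thus ?thesis using fz z_def by (intro exI[of _ "- f z"]) auto
qed

end

context epi begin

lemma I_bound: "\<exists>B. \<forall>t j. 0 \<le> t \<longrightarrow> t \<le> T \<longrightarrow> \<bar>I t j\<bar> \<le> B"
proof -
  obtain B where "\<forall>x\<in>{I t j |t j. 0 \<le> t \<and> t \<le> T}. \<bar>x\<bar> \<le> B"
    using I_bdd[of T] unfolding bounded_real by blast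
  thus ?thesis by blast
qed

lemma Iinf_bound: "\<exists>B. \<forall>j. \<bar>Iinf j\<bar> \<le> B"
  using Iinf_bdd unfolding bounded_real by blast

lemma I_cont': "continuous_on {ta..tb} (\<lambda>t. I t j)" if "0 \<le> ta" for ta tb
  by (rule continuous_on_subset[OF I_cont]) (use that in auto)

lemma I_nonneg: assumes "0 \<le> t" shows "0 \<le> I t j"
proof -
  obtain B where B: "\<forall>s j. 0 \<le> s \<longrightarrow> s \<le> t \<longrightarrow> \<bar>I s j\<bar> \<le> B" using I_bound by blast
  define L where "L = s0 * \<tau> * exp (\<tau> * B)"
  have L0: "0 \<le> L" unfolding L_def using s0 pos by auto
  have "(\<lambda>s j. - I s j) t j \<le> 0"
  proof (rule cmp_core[where w = "\<lambda>s j. - I s j" and L = L and \<mu> = lam and ta = 0 and tb = t and M = B])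
    show "0 \<le> L" by fact
    show "0 \<le> lam" using pos by auto
    show "continuous_on {0..t} (\<lambda>s. - I s j)" for j
      by (intro continuous_intros I_cont') auto
    show "- I 0 j \<le> 0" for j using I_init by simp
    show "- I s j \<le> B" if "0 \<le> s" "s \<le> t" for j s
    proof -
      have "\<bar>I s j\<bar> \<le> B" using B that by auto
      thus ?thesis by linarith
    qed
    show "0 \<le> t" "t \<le> t" using assms by auto
    fix j s assume s: "0 < s" "s \<le> t" "0 < - I s j"
    have d: "((\<lambda>s. - I s j) has_real_derivative - (f (I s j) + I0 j + lam * dlap (I s) j)) (at s)"
      using I_ode[of s j] s by (intro DERIV_minus) auto
    have "\<bar>I s j\<bar> \<le> B" using s by (intro B[rule_format]) auto
    hence fb: "- f (I s j) \<le> L * (- I s j)" unfolding L_def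
      using f_neg_bound[of "I s j" B] s by linarith
    have "- (f (I s j) + I0 j + lam * dlap (I s) j)
        = - f (I s j) - I0 j + lam * (- I s (j-1)) + lam * (- I s (j+1)) - 2 * lam * (- I s j)"
      unfolding dlap_def by (simp add: algebra_simps)
    also have "\<dots> \<le> L * (- I s j) + lam * (max 0 (- I s (j - 1)) + max 0 (- I s (j + 1)))"
    proof -
      have "lam * (- I s (j-1)) \<le> lam * max 0 (- I s (j - 1))" using pos by (intro mult_left_mono) auto
      moreover have "lam * (- I s (j+1)) \<le> lam * max 0 (- I s (j + 1))" using pos by (intro mult_left_mono) auto
      moreover have "0 \<le> 2 * lam * (- I s j)" using pos s by (intro mult_nonneg_nonneg) auto
      moreover have "0 \<le> I0 j" using I0_range by auto
      ultimately show ?thesis using fb by (simp add: algebra_simps)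
    qed
    finally show "\<exists>d. ((\<lambda>s. - I s j) has_real_derivative d) (at s) \<and>
           d \<le> L * - I s j + lam * (max 0 (- I s (j - 1)) + max 0 (- I s (j + 1)))"
      using d by blast
  qed
  thus ?thesis by simp
qed

lemma cmp_eq:
  fixes u v :: "real \<Rightarrow> int \<Rightarrow> real" and a :: "int \<Rightarrow> real"
  assumes cu: "\<And>j. continuous_on {ta..tb} (\<lambda>t. u t j)"
  and cv: "\<And>j. continuous_on {ta..tb} (\<lambda>t. v t j)"
  and init: "\<And>j. u ta j \<le> v ta j"
  and bdd: "\<And>j t. ta \<le> t \<Longrightarrow> t \<le> tb \<Longrightarrow> u t j - v t j \<le> M"
  and vnn: "\<And>j t. ta < t \<Longrightarrow> t \<le> tb \<Longrightarrow> 0 \<le> v t j"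
  and der: "\<And>j t. ta < t \<Longrightarrow> t \<le> tb \<Longrightarrow> v t j < u t j \<Longrightarrow>
      \<exists>du dv. ((\<lambda>s. u s j) has_real_derivative du) (at t) \<and> ((\<lambda>s. v s j) has_real_derivative dv) (at t)
        \<and> du \<le> f (u t j) + a j + lam * dlap (u t) j \<and> f (v t j) + a j + lam * dlap (v t) j \<le> dv"
  and t: "ta \<le> t" "t \<le> tb"
  shows "u t j \<le> v t j"
proof -
  have "(\<lambda>s j. u s j - v s j) t j \<le> 0"
  proof (rule cmp_core[where w = "\<lambda>s j. u s j - v s j" and L = r and \<mu> = lam and ta = ta and tb = tb and M = M])
    show "0 \<le> r" using r_pos by auto
    show "0 \<le> lam" using pos by auto
    show "continuous_on {ta..tb} (\<lambda>s. u s j - v s j)" for j using cu cv by (intro continuous_intros)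
    show "u ta j - v ta j \<le> 0" for j using init by (simp add: algebra_simps)
    show "u s j - v s j \<le> M" if "ta \<le> s" "s \<le> tb" for j s using bdd that by auto
    show "ta \<le> t" "t \<le> tb" using t by auto
    fix j s assume s: "ta < s" "s \<le> tb" "0 < u s j - v s j"
    obtain du dv where d: "((\<lambda>s. u s j) has_real_derivative du) (at s)" "((\<lambda>s. v s j) has_real_derivative dv) (at s)"
        "du \<le> f (u s j) + a j + lam * dlap (u s) j" "f (v s j) + a j + lam * dlap (v s) j \<le> dv"
      using der[of s j] s by auto
    have dd: "((\<lambda>s. u s j - v s j) has_real_derivative du - dv) (at s)" using d by (intro DERIV_diff)
    have fl: "f (u s j) - f (v s j) \<le> r * (u s j - v s j)" using f_lip[of "v s j" "u s j"] vnn[of s j] s by auto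
    have "du - dv \<le> f (u s j) - f (v s j) + lam * (dlap (u s) j - dlap (v s) j)"
      using d by (simp add: algebra_simps)
    also have "dlap (u s) j - dlap (v s) j = (u s (j-1) - v s (j-1)) + (u s (j+1) - v s (j+1)) - 2 * (u s j - v s j)"
      unfolding dlap_def by (simp add: algebra_simps)
    also have "f (u s j) - f (v s j) + lam * ((u s (j-1) - v s (j-1)) + (u s (j+1) - v s (j+1)) - 2 * (u s j - v s j))
       \<le> r * (u s j - v s j) + lam * (max 0 (u s (j - 1) - v s (j - 1)) + max 0 (u s (j + 1) - v s (j + 1)))"
    proof -
      have "lam * ((u s (j-1) - v s (j-1)) + (u s (j+1) - v s (j+1)) - 2 * (u s j - v s j))
          \<le> lam * (max 0 (u s (j - 1) - v s (j - 1)) + max 0 (u s (j + 1) - v s (j + 1)))"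
        using pos s by (intro mult_left_mono) auto
      thus ?thesis using fl by linarith
    qed
    finally show "\<exists>d. ((\<lambda>s. u s j - v s j) has_real_derivative d) (at s) \<and>
           d \<le> r * (u s j - v s j) + lam * (max 0 (u s (j - 1) - v s (j - 1)) + max 0 (u s (j + 1) - v s (j + 1)))"
      using dd by blast
  qed
  thus ?thesis by simp
qed

lemma I_le_Iinf: assumes "0 \<le> t" shows "I t j \<le> Iinf j"
proof -
  obtain B where B: "\<forall>s j. 0 \<le> s \<longrightarrow> s \<le> t \<longrightarrow> \<bar>I s j\<bar> \<le> B" using I_bound by blast
  show ?thesis
  proof (rule cmp_eq[where ta = 0 and tb = t and u = I and v = "\<lambda>s j. Iinf j" and M = B and a = I0])
    show "continuous_on {0..t} (\<lambda>s. I s j)" for j by (rule I_cont') simp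
    show "continuous_on {0..t} (\<lambda>s. Iinf j)" for j by simp
    show "I 0 j \<le> Iinf j" for j using I_init Iinf_pos[of j] by simp
    show "I s j - Iinf j \<le> B" if "0 \<le> s" "s \<le> t" for j s
    proof -
      have "\<bar>I s j\<bar> \<le> B" using B that by auto
      thus ?thesis using Iinf_pos[of j] by linarith
    qed
    show "0 \<le> Iinf j" for j using Iinf_pos[of j] by simp
    show "0 \<le> t" "t \<le> t" using assms by auto
    fix j s assume s: "0 < s" "s \<le> t" "Iinf j < I s j"
    show "\<exists>du dv. ((\<lambda>s. I s j) has_real_derivative du) (at s) \<and> ((\<lambda>s. Iinf j) has_real_derivative dv) (at s) \<and>
        du \<le> f (I s j) + I0 j + lam * dlap (I s) j \<and> f (Iinf j) + I0 j + lam * dlap (\<lambda>a. Iinf a) j \<le> dv"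
      using I_ode[of s j] s Iinf_eq[of j] by (intro exI[of _ "f (I s j) + I0 j + lam * dlap (I s) j"] exI[of _ 0]) auto
  qed
qed

lemma I_mono_shift: assumes "0 \<le> t" "0 \<le> h" shows "I t j \<le> I (t + h) j"
proof -
  obtain B where B: "\<forall>s j. 0 \<le> s \<longrightarrow> s \<le> t + h \<longrightarrow> \<bar>I s j\<bar> \<le> B" using I_bound by blast
  show ?thesis
  proof (rule cmp_eq[where ta = 0 and tb = t and u = I and v = "\<lambda>s j. I (s + h) j" and M = "2 * B" and a = I0])
    show "continuous_on {0..t} (\<lambda>s. I s j)" for j by (rule I_cont') simp
    show "continuous_on {0..t} (\<lambda>s. I (s + h) j)" for j
    proof -
      have "continuous_on {0..t} ((\<lambda>s. I s j) \<circ> (\<lambda>s. s + h))"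
        by (rule continuous_on_compose) (use assms in \<open>auto intro!: continuous_intros continuous_on_subset[OF I_cont[of j]]\<close>)
      thus ?thesis by (simp add: o_def)
    qed
    show "I 0 j \<le> I (0 + h) j" for j using I_init I_nonneg[of h j] assms by simp
    show "I s j - I (s + h) j \<le> 2 * B" if "0 \<le> s" "s \<le> t" for j s
    proof -
      have "\<bar>I s j\<bar> \<le> B" "\<bar>I (s+h) j\<bar> \<le> B" using B that assms by auto
      thus ?thesis by linarith
    qed
    show "0 \<le> I (s + h) j" if "0 < s" for j s using that assms by (intro I_nonneg) auto
    show "0 \<le> t" "t \<le> t" using assms by auto
    fix j s assume s: "0 < s" "s \<le> t" "I (s + h) j < I s j"
    have d2: "((\<lambda>s. I (s + h) j) has_real_derivative (f (I (s + h) j) + I0 j + lam * dlap (I (s + h)) j)) (at s)"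
    proof -
      have "((\<lambda>s. I s j) has_real_derivative (f (I (s + h) j) + I0 j + lam * dlap (I (s + h)) j)) (at (s + h))"
        using I_ode[of "s + h" j] s assms by auto
      hence "(((\<lambda>s. I s j) \<circ> (\<lambda>s. s + h)) has_real_derivative (f (I (s + h) j) + I0 j + lam * dlap (I (s + h)) j) * 1) (at s)"
        by (intro DERIV_chain) (auto intro!: derivative_eq_intros)
      thus ?thesis by (simp add: o_def)
    qed
    show "\<exists>du dv. ((\<lambda>s. I s j) has_real_derivative du) (at s) \<and> ((\<lambda>s. I (s + h) j) has_real_derivative dv) (at s) \<and>
        du \<le> f (I s j) + I0 j + lam * dlap (I s) j \<and> f (I (s + h) j) + I0 j + lam * dlap (I (s + h)) j \<le> dv"
      using I_ode[of s j] s d2 by blast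
  qed
qed

lemma I_mono: assumes "0 \<le> t" "t \<le> t'" shows "I t j \<le> I t' j"
  using I_mono_shift[of t "t' - t" j] assms by simp

end

context epi begin

lemma pos_step:
  assumes H: "\<And>s. 0 < s \<Longrightarrow> 0 < I0 j \<or> 0 < I s (j-1) \<or> 0 < I s (j+1)"
  and t: "0 < t"
  shows "0 < I t j"
proof -
  define K where "K = \<eta> + 2 * lam"
  define g where "g s = exp (K * s) * I s j" for s
  have "g 0 < g t"
  proof (rule DERIV_pos_imp_increasing_open[OF t])
    show "continuous_on {0..t} g" unfolding g_def
      by (intro continuous_intros I_cont') auto
    fix x assume x: "0 < x" "x < t"
    define D where "D = f (I x j) + I0 j + lam * dlap (I x) j"
    have "(g has_real_derivative (K * exp (K * x) * I x j + exp (K * x) * D)) (at x)"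
      unfolding g_def D_def using I_ode[of x j] x
      by (auto intro!: derivative_eq_intros)
    moreover have "K * exp (K * x) * I x j + exp (K * x) * D > 0"
    proof -
      have nn: "0 \<le> I x j" "0 \<le> I x (j-1)" "0 \<le> I x (j+1)" "0 \<le> I0 j" using I_nonneg x I0_range by auto
      have "f (I x j) \<ge> - \<eta> * I x j" using f_ge_neg nn by auto
      hence "K * I x j + D \<ge> I0 j + lam * (I x (j-1) + I x (j+1))"
        unfolding D_def K_def dlap_def by (simp add: algebra_simps)
      moreover have "I0 j + lam * (I x (j-1) + I x (j+1)) > 0"
        using H[OF x(1)] nn pos by (auto intro: add_pos_nonneg add_nonneg_pos)
      ultimately have "K * I x j + D > 0" by linarith
      hence "exp (K * x) * (K * I x j + D) > 0" by simp
      thus ?thesis by (simp add: algebra_simps)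
    qed
    ultimately show "\<exists>y. (g has_real_derivative y) (at x) \<and> 0 < y" by blast
  qed
  hence "0 < exp (K * t) * I t j" using I_init unfolding g_def by simp
  thus ?thesis by (simp add: zero_less_mult_iff)
qed

lemma I_pos: assumes "0 < t" shows "0 < I t j"
proof -
  obtain j0 where j0: "0 < I0 j0" using I0_nz by blast
  have P: "\<forall>j. nat \<bar>j - j0\<bar> \<le> n \<longrightarrow> (\<forall>t>0. 0 < I t j)" for n
  proof (induction n)
    case 0
    show ?case
    proof (rule allI, rule impI)
      fix j :: int assume "nat \<bar>j - j0\<bar> \<le> 0"
      hence "j = j0" by auto
      thus "\<forall>t>0. 0 < I t j" using pos_step j0 by blast
    qed
  next
    case (Suc n)
    show ?case
    proof (rule allI, rule impI)
      fix j assume j: "nat \<bar>j - j0\<bar> \<le> Suc n"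
      show "\<forall>t>0. 0 < I t j"
      proof (cases "nat \<bar>j - j0\<bar> \<le> n")
        case True thus ?thesis using Suc by auto
      next
        case False
        show ?thesis
        proof (cases "j > j0")
          case True
          hence "nat \<bar>(j-1) - j0\<bar> \<le> n" using j False by auto
          hence "\<forall>t>0. 0 < I t (j-1)" using Suc by auto
          thus ?thesis using pos_step by blast
        next
          case False
          hence "nat \<bar>(j+1) - j0\<bar> \<le> n" using j \<open>\<not> nat \<bar>j - j0\<bar> \<le> n\<close> by auto
          hence "\<forall>t>0. 0 < I t (j+1)" using Suc by auto
          thus ?thesis using pos_step by blast
        qed
      qed
    qed
  qed
  show ?thesis using P[of "nat \<bar>j - j0\<bar>"] assms by auto
qed

definition kk :: "real \<Rightarrow> real" where "kk \<gamma> = exp \<gamma> - 2 + exp (- \<gamma>)"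

lemma kk_pos: "kk \<gamma> \<ge> 0"
proof -
  have "exp (\<gamma>/2) * exp (\<gamma>/2) = exp \<gamma>" "exp (-\<gamma>/2) * exp (-\<gamma>/2) = exp (-\<gamma>)"
       "exp (\<gamma>/2) * exp (-\<gamma>/2) = 1" by (simp_all add: exp_add[symmetric])
  hence "kk \<gamma> = (exp (\<gamma>/2) - exp (-\<gamma>/2))^2" unfolding kk_def power2_eq_square by (simp add: algebra_simps)
  thus ?thesis by simp
qed

lemma abs_nb: "exp (- \<gamma> * real_of_int \<bar>j - 1\<bar>) + exp (- \<gamma> * real_of_int \<bar>j + 1\<bar>) \<le> (kk \<gamma> + 2) * exp (- \<gamma> * real_of_int \<bar>j\<bar>)"
  if "\<gamma> > 0" for j :: int and \<gamma> :: real
proof -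
  have e: "exp (a + b) = exp a * exp b" for a b :: real by (simp add: exp_add)
  consider "j \<ge> 1" | "j \<le> -1" | "j = 0" by linarith
  thus ?thesis
  proof cases
    case 1
    hence "\<bar>real_of_int (j - 1)\<bar> = \<bar>real_of_int j\<bar> - 1" "\<bar>real_of_int (j + 1)\<bar> = \<bar>real_of_int j\<bar> + 1" by auto
    hence "exp (- \<gamma> * real_of_int \<bar>j - 1\<bar>) = exp \<gamma> * exp (- \<gamma> * real_of_int \<bar>j\<bar>)" "exp (- \<gamma> * real_of_int \<bar>j + 1\<bar>) = exp (-\<gamma>) * exp (- \<gamma> * real_of_int \<bar>j\<bar>)"
      by (simp_all add: e[symmetric] algebra_simps)
    thus ?thesis unfolding kk_def by (simp add: algebra_simps)
  next
    case 2
    hence "\<bar>real_of_int (j - 1)\<bar> = \<bar>real_of_int j\<bar> + 1" "\<bar>real_of_int (j + 1)\<bar> = \<bar>real_of_int j\<bar> - 1" by auto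
    hence "exp (- \<gamma> * real_of_int \<bar>j - 1\<bar>) = exp (-\<gamma>) * exp (- \<gamma> * real_of_int \<bar>j\<bar>)" "exp (- \<gamma> * real_of_int \<bar>j + 1\<bar>) = exp \<gamma> * exp (- \<gamma> * real_of_int \<bar>j\<bar>)"
      by (simp_all add: e[symmetric] algebra_simps)
    thus ?thesis unfolding kk_def by (simp add: algebra_simps)
  next
    case 3
    have "exp (-\<gamma>) \<le> exp \<gamma>" using that by simp
    thus ?thesis using 3 unfolding kk_def by simp
  qed
qed

lemma phi_super:
  fixes \<gamma> c t y D A :: real and j :: int
  assumes g: "\<gamma> > 0" and D: "D = \<gamma> * c - r - lam * kk \<gamma>" "D > 0"
  and A: "A \<ge> 0" "\<And>j. I0 j \<le> D * A * exp (- \<gamma> * real_of_int \<bar>j\<bar>)"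
  and t: "0 \<le> t" and y: "0 \<le> y"
  shows "f (y + A * exp (\<gamma> * (c * t - real_of_int \<bar>j\<bar>))) + I0 j + lam * dlap (\<lambda>j. y + A * exp (\<gamma> * (c * t - real_of_int \<bar>j\<bar>))) j
         \<le> f y + \<gamma> * c * (A * exp (\<gamma> * (c * t - real_of_int \<bar>j\<bar>)))"
proof -
  define \<phi> where "\<phi> j = A * exp (\<gamma> * (c * t - real_of_int \<bar>j\<bar>))" for j :: int
  have \<phi>e: "\<phi> j = A * exp (\<gamma> * c * t) * exp (- \<gamma> * real_of_int \<bar>j\<bar>)" for j
    unfolding \<phi>_def by (simp add: exp_add[symmetric] algebra_simps)
  have p0: "\<phi> j \<ge> 0" for j unfolding \<phi>_def using A by auto
  have fl: "f (y + \<phi> j) \<le> f y + r * \<phi> j" using f_lip[of y "y + \<phi> j"] y p0[of j] by auto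
  have "dlap (\<lambda>j. y + \<phi> j) j = \<phi> (j-1) + \<phi> (j+1) - 2 * \<phi> j" unfolding dlap_def by simp
  also have "\<phi> (j-1) + \<phi> (j+1) \<le> (kk \<gamma> + 2) * \<phi> j"
  proof -
    have "A * exp (\<gamma> * c * t) \<ge> 0" using A by auto
    hence "A * exp (\<gamma> * c * t) * (exp (- \<gamma> * real_of_int \<bar>j - 1\<bar>) + exp (- \<gamma> * real_of_int \<bar>j + 1\<bar>))
        \<le> A * exp (\<gamma> * c * t) * ((kk \<gamma> + 2) * exp (- \<gamma> * real_of_int \<bar>j\<bar>))"
      using abs_nb[OF g, of j] by (intro mult_left_mono) auto
    thus ?thesis unfolding \<phi>e by (simp add: algebra_simps)
  qed
  finally have dl: "dlap (\<lambda>j. y + \<phi> j) j \<le> kk \<gamma> * \<phi> j" by (simp add: algebra_simps)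
  have "exp (- \<gamma> * real_of_int \<bar>j\<bar>) \<le> exp (\<gamma> * c * t) * exp (- \<gamma> * real_of_int \<bar>j\<bar>)"
  proof -
    have "\<gamma> * c * t \<ge> 0" using g D t by (smt (verit) kk_pos mult_nonneg_nonneg r_pos pos(3) zero_less_mult_iff)
    hence "1 \<le> exp (\<gamma> * c * t)" by simp
    thus ?thesis by (simp add: mult_le_cancel_right1)
  qed
  hence "D * A * exp (- \<gamma> * real_of_int \<bar>j\<bar>) \<le> D * \<phi> j" unfolding \<phi>e using D A
    by (simp add: mult_left_mono algebra_simps)
  hence I0b: "I0 j \<le> D * \<phi> j" using A(2)[of j] by linarith
  have "lam * dlap (\<lambda>j. y + \<phi> j) j \<le> lam * (kk \<gamma> * \<phi> j)" using dl pos by (intro mult_left_mono) auto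
  hence "f (y + \<phi> j) + I0 j + lam * dlap (\<lambda>j. y + \<phi> j) j \<le> f y + r * \<phi> j + D * \<phi> j + lam * (kk \<gamma> * \<phi> j)"
    using fl I0b by linarith
  also have "\<dots> = f y + \<gamma> * c * \<phi> j" unfolding D by (simp add: algebra_simps)
  finally show ?thesis unfolding \<phi>_def .
qed

lemma A_exists:
  fixes \<gamma> D :: real
  assumes "D > 0" "\<gamma> > 0"
  shows "\<exists>A\<ge>0. \<forall>j. I0 j \<le> D * A * exp (- \<gamma> * real_of_int \<bar>j\<bar>)"
proof -
  define S where "S = {j. I0 j \<noteq> 0}"
  define A where "A = (\<Sum>j\<in>S. I0 j * exp (\<gamma> * real_of_int \<bar>j\<bar>)) / D"
  have nn: "0 \<le> I0 j * exp (\<gamma> * real_of_int \<bar>j\<bar>)" for j using I0_range[of j] by auto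
  have A0: "A \<ge> 0" unfolding A_def using assms nn by (intro divide_nonneg_pos sum_nonneg) auto
  { fix j
    have "I0 j \<le> D * A * exp (- \<gamma> * real_of_int \<bar>j\<bar>)"
    proof (cases "j \<in> S")
      case True
      have "I0 j * exp (\<gamma> * real_of_int \<bar>j\<bar>) \<le> (\<Sum>j\<in>S. I0 j * exp (\<gamma> * real_of_int \<bar>j\<bar>))"
        using True I0_fin nn unfolding S_def by (intro member_le_sum) auto
      hence "I0 j * exp (\<gamma> * real_of_int \<bar>j\<bar>) \<le> D * A" unfolding A_def using assms by simp
      hence "I0 j * exp (\<gamma> * real_of_int \<bar>j\<bar>) * exp (- \<gamma> * real_of_int \<bar>j\<bar>) \<le> D * A * exp (- \<gamma> * real_of_int \<bar>j\<bar>)"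
        by (intro mult_right_mono) auto
      thus ?thesis by (simp add: mult.assoc exp_add[symmetric])
    next
      case False
      hence "I0 j = 0" unfolding S_def by auto
      thus ?thesis using A0 assms by auto
    qed }
  thus ?thesis using A0 by blast
qed

lemma I_upper_exp:
  fixes \<gamma> c t D A :: real and j :: int
  assumes g: "\<gamma> > 0" and D: "D = \<gamma> * c - r - lam * kk \<gamma>" "D > 0"
  and A: "A \<ge> 0" "\<And>j. I0 j \<le> D * A * exp (- \<gamma> * real_of_int \<bar>j\<bar>)"
  and t: "0 \<le> t"
  shows "I t j \<le> A * exp (\<gamma> * (c * t - real_of_int \<bar>j\<bar>))"
proof -
  obtain B where B: "\<forall>s j. 0 \<le> s \<longrightarrow> s \<le> t \<longrightarrow> \<bar>I s j\<bar> \<le> B" using I_bound by blast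
  show ?thesis
  proof (rule cmp_eq[where ta = 0 and tb = t and u = I and v = "\<lambda>s j. A * exp (\<gamma> * (c * s - real_of_int \<bar>j\<bar>))" and M = B and a = I0])
    show "continuous_on {0..t} (\<lambda>s. I s j)" for j by (rule I_cont') simp
    show "continuous_on {0..t} (\<lambda>s. A * exp (\<gamma> * (c * s - real_of_int \<bar>j\<bar>)))" for j by (intro continuous_intros)
    show "I 0 j \<le> A * exp (\<gamma> * (c * 0 - real_of_int \<bar>j\<bar>))" for j using I_init A by simp
    show "I s j - A * exp (\<gamma> * (c * s - real_of_int \<bar>j\<bar>)) \<le> B" if "0 \<le> s" "s \<le> t" for j s
    proof -
      have "\<bar>I s j\<bar> \<le> B" using that by (intro B[rule_format]) auto
      moreover have "0 \<le> A * exp (\<gamma> * (c * s - real_of_int \<bar>j\<bar>))" using A by auto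
      ultimately show ?thesis by linarith
    qed
    show "0 \<le> A * exp (\<gamma> * (c * s - real_of_int \<bar>j\<bar>))" for j s using A by auto
    show "0 \<le> t" "t \<le> t" using t by auto
    fix j s assume s: "0 < s" "s \<le> t" "A * exp (\<gamma> * (c * s - real_of_int \<bar>j\<bar>)) < I s j"
    have dv: "((\<lambda>s. A * exp (\<gamma> * (c * s - real_of_int \<bar>j\<bar>))) has_real_derivative \<gamma> * c * (A * exp (\<gamma> * (c * s - real_of_int \<bar>j\<bar>)))) (at s)"
      by (auto intro!: derivative_eq_intros simp: algebra_simps)
    have "f (0 + A * exp (\<gamma> * (c * s - real_of_int \<bar>j\<bar>))) + I0 j + lam * dlap (\<lambda>j. 0 + A * exp (\<gamma> * (c * s - real_of_int \<bar>j\<bar>))) j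
         \<le> f 0 + \<gamma> * c * (A * exp (\<gamma> * (c * s - real_of_int \<bar>j\<bar>)))"
      by (rule phi_super[OF g D A]) (use s in auto)
    hence "f (A * exp (\<gamma> * (c * s - real_of_int \<bar>j\<bar>))) + I0 j + lam * dlap (\<lambda>j. A * exp (\<gamma> * (c * s - real_of_int \<bar>j\<bar>))) j
         \<le> \<gamma> * c * (A * exp (\<gamma> * (c * s - real_of_int \<bar>j\<bar>)))" using f_0 by simp
    thus "\<exists>du dv. ((\<lambda>s. I s j) has_real_derivative du) (at s) \<and>
          ((\<lambda>s. A * exp (\<gamma> * (c * s - real_of_int \<bar>j\<bar>))) has_real_derivative dv) (at s) \<and>
          du \<le> f (I s j) + I0 j + lam * dlap (I s) j \<and>
          f (A * exp (\<gamma> * (c * s - real_of_int \<bar>j\<bar>))) + I0 j + lam * dlap (\<lambda>j. A * exp (\<gamma> * (c * s - real_of_int \<bar>j\<bar>))) j \<le> dv"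
      using I_ode[of s j] s dv by blast
  qed
qed

lemma Iinf_upper:
  assumes e: "e > 0"
  shows "\<exists>R::real. \<forall>j::int. R \<le> real_of_int \<bar>j\<bar> \<longrightarrow> Iinf j \<le> vs + 2 * e"
proof -
  define \<gamma> :: real where "\<gamma> = 1"
  define c where "c = r + lam * kk 1 + 1"
  define D where "D = \<gamma> * c - r - lam * kk \<gamma>"
  have D1: "D = 1" unfolding D_def c_def \<gamma>_def by simp
  obtain A where A: "A \<ge> 0" "\<And>j. I0 j \<le> D * A * exp (- \<gamma> * real_of_int \<bar>j\<bar>)" using A_exists[of D \<gamma>] D1 \<gamma>_def by auto
  obtain m where m: "m > 0" "\<And>y. vs + e \<le> y \<Longrightarrow> f y \<le> - m" using f_neg_unif[OF e] by blast
  obtain Bi where Bi: "\<And>j. \<bar>Iinf j\<bar> \<le> Bi" using Iinf_bound by blast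
  define Bt where "Bt = max Bi (vs + e)"
  define t1 where "t1 = (Bt - (vs + e)) / m"
  have t1: "t1 \<ge> 0" unfolding t1_def Bt_def using m by auto
  define y where "y s = Bt - m * s" for s
  have y1: "y t1 = vs + e" unfolding y_def t1_def using m by simp
  have ylow: "y s \<ge> vs + e" if "s \<le> t1" for s
  proof -
    have "m * s \<le> m * t1" using that m by (intro mult_left_mono) auto
    thus ?thesis unfolding y_def using y1 unfolding y_def by linarith
  qed
  have key: "Iinf j \<le> y t1 + A * exp (\<gamma> * (c * t1 - real_of_int \<bar>j\<bar>))" for j
  proof (rule cmp_eq[where ta = 0 and tb = t1 and u = "\<lambda>s j. Iinf j" and v = "\<lambda>s j. y s + A * exp (\<gamma> * (c * s - real_of_int \<bar>j\<bar>))" and M = Bi and a = I0])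
    show "continuous_on {0..t1} (\<lambda>s. Iinf j)" for j by simp
    show "continuous_on {0..t1} (\<lambda>s. y s + A * exp (\<gamma> * (c * s - real_of_int \<bar>j\<bar>)))" for j unfolding y_def by (intro continuous_intros)
    show "Iinf j \<le> y 0 + A * exp (\<gamma> * (c * 0 - real_of_int \<bar>j\<bar>))" for j
    proof -
      have "Iinf j \<le> Bt" using Bi[of j] unfolding Bt_def by auto
      moreover have "0 \<le> A * exp (\<gamma> * (c * 0 - real_of_int \<bar>j\<bar>))" using A by auto
      ultimately show ?thesis unfolding y_def by simp
    qed
    show "Iinf j - (y s + A * exp (\<gamma> * (c * s - real_of_int \<bar>j\<bar>))) \<le> Bi" if "0 \<le> s" "s \<le> t1" for j s
    proof -
      have "y s \<ge> 0" using ylow[of s] that vs e by auto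
      moreover have "0 \<le> A * exp (\<gamma> * (c * s - real_of_int \<bar>j\<bar>))" using A by auto
      ultimately show ?thesis using Bi[of j] by linarith
    qed
    show "0 \<le> y s + A * exp (\<gamma> * (c * s - real_of_int \<bar>j\<bar>))" if "0 < s" "s \<le> t1" for j s
    proof -
      have "y s \<ge> 0" using ylow[of s] that vs e by auto
      moreover have "0 \<le> A * exp (\<gamma> * (c * s - real_of_int \<bar>j\<bar>))" using A by auto
      ultimately show ?thesis by linarith
    qed
    show "0 \<le> t1" "t1 \<le> t1" using t1 by auto
    fix j s assume s: "0 < s" "s \<le> t1" "y s + A * exp (\<gamma> * (c * s - real_of_int \<bar>j\<bar>)) < Iinf j"
    have dv: "((\<lambda>s. y s + A * exp (\<gamma> * (c * s - real_of_int \<bar>j\<bar>))) has_real_derivative - m + \<gamma> * c * (A * exp (\<gamma> * (c * s - real_of_int \<bar>j\<bar>)))) (at s)"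
      unfolding y_def by (auto intro!: derivative_eq_intros simp: algebra_simps)
    have ys: "vs + e \<le> y s" using ylow s by auto
    have "f (y s + A * exp (\<gamma> * (c * s - real_of_int \<bar>j\<bar>))) + I0 j + lam * dlap (\<lambda>j. y s + A * exp (\<gamma> * (c * s - real_of_int \<bar>j\<bar>))) j
         \<le> f (y s) + \<gamma> * c * (A * exp (\<gamma> * (c * s - real_of_int \<bar>j\<bar>)))"
      by (rule phi_super[where D = D]) (use s A D1 ys vs e in \<open>auto simp: \<gamma>_def D_def\<close>)
    also have "\<dots> \<le> - m + \<gamma> * c * (A * exp (\<gamma> * (c * s - real_of_int \<bar>j\<bar>)))" using m(2)[OF ys] by simp
    finally have sup: "f (y s + A * exp (\<gamma> * (c * s - real_of_int \<bar>j\<bar>))) + I0 j + lam * dlap (\<lambda>j. y s + A * exp (\<gamma> * (c * s - real_of_int \<bar>j\<bar>))) j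
         \<le> - m + \<gamma> * c * (A * exp (\<gamma> * (c * s - real_of_int \<bar>j\<bar>)))" .
    show "\<exists>du dv. ((\<lambda>s. Iinf j) has_real_derivative du) (at s) \<and>
          ((\<lambda>s. y s + A * exp (\<gamma> * (c * s - real_of_int \<bar>j\<bar>))) has_real_derivative dv) (at s) \<and>
          du \<le> f (Iinf j) + I0 j + lam * dlap Iinf j \<and>
          f (y s + A * exp (\<gamma> * (c * s - real_of_int \<bar>j\<bar>))) + I0 j + lam * dlap (\<lambda>j. y s + A * exp (\<gamma> * (c * s - real_of_int \<bar>j\<bar>))) j \<le> dv"
      using dv sup Iinf_eq[of j] by (intro exI[of _ 0] exI[of _ "- m + \<gamma> * c * (A * exp (\<gamma> * (c * s - real_of_int \<bar>j\<bar>)))"]) auto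
  qed
  define R where "R = c * t1 + \<bar>ln (e / (A + 1))\<bar>"
  { fix j :: int assume j: "R \<le> real_of_int \<bar>j\<bar>"
    have "c * t1 - \<bar>j\<bar> \<le> ln (e / (A + 1))" using j unfolding R_def by auto
    hence "exp (c * t1 - \<bar>j\<bar>) \<le> e / (A + 1)"
      using A e by (metis exp_le_cancel_iff exp_ln divide_pos_pos add_nonneg_pos zero_less_one)
    hence "A * exp (c * t1 - \<bar>j\<bar>) \<le> A * (e / (A + 1))" using A by (intro mult_left_mono) auto
    also have "\<dots> \<le> e" using A e by (simp add: field_simps)
    finally have "Iinf j \<le> vs + 2 * e" using key[of j] y1 unfolding \<gamma>_def by simp }
  thus ?thesis by blast
qed

end

lemma limsup_zero:
  fixes g :: "real \<Rightarrow> int \<Rightarrow> real" and S :: "real \<Rightarrow> int set"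
  assumes ne: "\<forall>\<^sub>F t in at_top. S t \<noteq> {}"
  and ev: "\<And>e. e > 0 \<Longrightarrow> \<forall>\<^sub>F t in at_top. \<forall>j\<in>S t. \<bar>g t j\<bar> \<le> e"
  shows "Limsup at_top (\<lambda>t. SUP j\<in>S t. ereal \<bar>g t j\<bar>) = 0"
proof (rule antisym)
  show "Limsup at_top (\<lambda>t. SUP j\<in>S t. ereal \<bar>g t j\<bar>) \<le> 0"
    unfolding Limsup_le_iff
  proof (intro allI impI)
    fix y :: ereal assume y: "y > 0"
    obtain e :: real where e: "e > 0" "ereal e < y"
    proof (cases y)
      case (real z) thus ?thesis using y that[of "z/2"] by auto
    next
      case PInf thus ?thesis using that[of 1] by auto
    next
      case MInf thus ?thesis using y by auto
    qed
    show "\<forall>\<^sub>F t in at_top. (SUP j\<in>S t. ereal \<bar>g t j\<bar>) < y"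
      using ev[OF e(1)]
    proof (rule eventually_mono)
      fix t assume "\<forall>j\<in>S t. \<bar>g t j\<bar> \<le> e"
      hence "(SUP j\<in>S t. ereal \<bar>g t j\<bar>) \<le> ereal e" by (intro SUP_least) auto
      thus "(SUP j\<in>S t. ereal \<bar>g t j\<bar>) < y" using e by auto
    qed
  qed
  show "0 \<le> Limsup at_top (\<lambda>t. SUP j\<in>S t. ereal \<bar>g t j\<bar>)"
  proof (rule le_Limsup)
    show "at_top \<noteq> (bot :: real filter)" by simp
    show "\<forall>\<^sub>F t in at_top. 0 \<le> (SUP j\<in>S t. ereal \<bar>g t j\<bar>)"
      using ne
    proof (rule eventually_mono)
      fix t assume "S t \<noteq> {}"
      then obtain j where "j \<in> S t" by auto
      thus "0 \<le> (SUP j\<in>S t. ereal \<bar>g t j\<bar>)" by (intro SUP_upper2[of j]) auto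
    qed
  qed
qed

context epi begin

lemma cstar_eq: "c_star s0 \<tau> \<eta> lam = (INF \<gamma>\<in>{0<..}. (r + lam * kk \<gamma>) / \<gamma>)"
  unfolding c_star_def r_R0 kk_def by (simp add: algebra_simps)

lemma part2:
  assumes c: "c > c_star s0 \<tau> \<eta> lam"
  shows "Limsup at_top (\<lambda>t. SUP j\<in>{j. real_of_int \<bar>j\<bar> \<ge> c * t}. ereal \<bar>I t j\<bar>) = 0"
proof (rule limsup_zero)
  obtain \<gamma> :: real where g: "\<gamma> > 0" "(r + lam * kk \<gamma>) / \<gamma> < c"
    using cInf_lessD[of "(\<lambda>\<gamma>. (r + lam * kk \<gamma>) / \<gamma>) ` {0<..}" c] c unfolding cstar_eq by auto
  define k where "k = (r + lam * kk \<gamma>) / \<gamma>"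
  define c' where "c' = (k + c) / 2"
  define D where "D = \<gamma> * c' - r - lam * kk \<gamma>"
  have kc: "k < c" using g unfolding k_def by auto
  have D: "D = \<gamma> * (c - k) / 2" unfolding D_def c'_def k_def using g by (simp add: field_simps)
  have "\<gamma> * (c - k) > 0" using kc g by auto
  hence D0: "D > 0" using D by auto
  obtain A where A: "A \<ge> 0" "\<And>j. I0 j \<le> D * A * exp (- \<gamma> * real_of_int \<bar>j\<bar>)"
    using A_exists[OF D0 g(1)] by auto
  define \<kappa> where "\<kappa> = \<gamma> * (c - c')"
  have \<kappa>: "\<kappa> > 0" unfolding \<kappa>_def c'_def using kc g by auto
  show "\<forall>\<^sub>F t in at_top. {j. c * t \<le> real_of_int \<bar>j\<bar>} \<noteq> {}"
  proof -
    have "{j. c * t \<le> real_of_int \<bar>j\<bar>} \<noteq> {}" for t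
    proof -
      have "c * t \<le> real_of_int \<bar>\<lceil>\<bar>c * t\<bar>\<rceil>\<bar>" by linarith
      thus ?thesis by blast
    qed
    thus ?thesis by simp
  qed
  fix e :: real assume e: "e > 0"
  define T where "T = max 0 (ln ((A + 1) / e) / \<kappa>)"
  show "\<forall>\<^sub>F t in at_top. \<forall>j\<in>{j. c * t \<le> real_of_int \<bar>j\<bar>}. \<bar>I t j\<bar> \<le> e"
    unfolding eventually_at_top_linorder
  proof (intro exI[of _ T] allI impI ballI)
    fix t j assume t: "T \<le> t" and j: "j \<in> {j. c * t \<le> real_of_int \<bar>j\<bar>}"
    have t0: "0 \<le> t" using t unfolding T_def by auto
    have "I t j \<le> A * exp (\<gamma> * (c' * t - real_of_int \<bar>j\<bar>))"
      by (rule I_upper_exp[OF g(1) D_def D0 A t0])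
    also have "\<dots> \<le> A * exp (- \<kappa> * t)"
    proof -
      have "\<gamma> * (c' * t - real_of_int \<bar>j\<bar>) \<le> \<gamma> * (c' * t - c * t)" using j g by (intro mult_left_mono) auto
      also have "\<dots> = - \<kappa> * t" unfolding \<kappa>_def by (simp add: algebra_simps)
      finally show ?thesis using A by (intro mult_left_mono) auto
    qed
    also have "\<dots> \<le> e"
    proof -
      have "ln ((A + 1) / e) \<le> \<kappa> * t" using t \<kappa> unfolding T_def by (simp add: field_simps)
      hence "(A + 1) / e \<le> exp (\<kappa> * t)" using A e by (metis exp_le_cancel_iff exp_ln divide_pos_pos add_nonneg_pos zero_less_one)
      hence "A + 1 \<le> e * exp (\<kappa> * t)" using e by (simp add: field_simps)
      hence "A \<le> e * exp (\<kappa> * t)" by linarith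
      hence "A * exp (- \<kappa> * t) \<le> e * exp (\<kappa> * t) * exp (- \<kappa> * t)" by (intro mult_right_mono) auto
      also have "\<dots> = e" by (simp add: mult.assoc exp_add[symmetric])
      finally show ?thesis .
    qed
    finally have "I t j \<le> e" .
    moreover have "0 \<le> I t j" using I_nonneg t0 by auto
    ultimately show "\<bar>I t j\<bar> \<le> e" by auto
  qed
qed

end

definition hump :: "real \<Rightarrow> real \<Rightarrow> real \<Rightarrow> real" where
  "hump a b x = exp (- a * x) * sin (b * max 0 (min x (pi / b)))"

lemma hump_in: "0 < b \<Longrightarrow> 0 < x \<Longrightarrow> x < pi / b \<Longrightarrow> hump a b x = exp (- a * x) * sin (b * x)"
  unfolding hump_def by simp

lemma hump_out: assumes "0 < b" "x \<le> 0 \<or> pi / b \<le> x" shows "hump a b x = 0"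
proof -
  have "b * max 0 (min x (pi / b)) = 0 \<or> b * max 0 (min x (pi / b)) = pi"
    using assms by (auto simp: min_def max_def)
  thus ?thesis unfolding hump_def by auto
qed

lemma hump_cont:
  fixes g :: "real \<Rightarrow> real" and a b :: real
  assumes "continuous_on S g"
  shows "continuous_on S (\<lambda>s. hump a b (g s))"
proof -
  have hc: "continuous_on S (\<lambda>s. max 0 (min (g s) (pi / b)))"
    by (intro continuous_on_max continuous_on_min continuous_intros assms)
  have "continuous_on S (\<lambda>s. sin (b * max 0 (min (g s) (pi / b))))"
    by (intro continuous_on_sin continuous_on_mult continuous_on_const hc)
  thus ?thesis unfolding hump_def by (intro continuous_intros assms)
qed

lemma hump_nonneg: assumes "0 < b" shows "0 \<le> hump a b x"
proof -
  have "0 \<le> b * max 0 (min x (pi / b))" using assms by auto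
  moreover have "b * max 0 (min x (pi / b)) \<le> b * (pi / b)" using assms by (intro mult_left_mono) auto
  ultimately have "0 \<le> sin (b * max 0 (min x (pi / b)))" using assms by (intro sin_ge_zero) auto
  thus ?thesis unfolding hump_def by auto
qed

lemma hump_le1: assumes "0 < b" "0 \<le> a" shows "hump a b x \<le> 1"
proof (cases "0 < x \<and> x < pi / b")
  case True
  have "exp (- a * x) \<le> 1" using assms True by (simp add: mult_nonneg_nonneg)
  moreover have "sin (b * x) \<le> 1" by simp
  moreover have "0 \<le> sin (b * x)" using True assms by (intro sin_ge_zero) (auto simp: field_simps)
  ultimately show ?thesis using hump_in[OF assms(1)] True by (simp add: mult_le_one)
next
  case False thus ?thesis using hump_out[OF assms(1)] by force
qed

lemma hump_ge0: assumes "0 < b" "0 \<le> a" shows "exp (- a * (pi / b)) * hump 0 b x \<le> hump a b x"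
proof (cases "0 < x \<and> x < pi / b")
  case True
  have "a * x \<le> a * (pi / b)" using True assms by (intro mult_left_mono) auto
  hence "exp (- a * (pi / b)) \<le> exp (- a * x)" by simp
  moreover have "0 \<le> sin (b * x)" using True assms by (intro sin_ge_zero) (auto simp: field_simps)
  ultimately show ?thesis using hump_in[OF assms(1)] True by (simp add: mult_right_mono)
next
  case False thus ?thesis using hump_out[OF assms(1)] by force
qed

lemma hump_nb:
  assumes b: "0 < b" "b \<le> pi" and x: "0 < x" "x < pi / b"
  shows "exp (- a * (x - 1)) * sin (b * (x - 1)) \<le> hump a b (x - 1)"
    and "exp (- a * (x + 1)) * sin (b * (x + 1)) \<le> hump a b (x + 1)"
proof -
  have pb: "1 \<le> pi / b" using b by (simp add: field_simps)
  show "exp (- a * (x - 1)) * sin (b * (x - 1)) \<le> hump a b (x - 1)"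
  proof (cases "0 < x - 1")
    case True thus ?thesis using hump_in[OF b(1), of "x-1" a] x by auto
  next
    case False
    have "0 \<le> - (b * (x - 1))" using False b by (simp add: mult_nonneg_nonpos)
    moreover have "- (b * (x - 1)) \<le> pi"
    proof -
      have "- (x - 1) \<le> pi / b" using x pb by auto
      hence "b * (- (x - 1)) \<le> b * (pi / b)" using b by (intro mult_left_mono) auto
      moreover have "- (b * (x - 1)) = b * (- (x - 1))" by (simp add: algebra_simps)
      ultimately show ?thesis using b by simp
    qed
    ultimately have "0 \<le> sin (- (b * (x - 1)))" by (intro sin_ge_zero)
    hence "sin (b * (x - 1)) \<le> 0" by simp
    hence "exp (- a * (x - 1)) * sin (b * (x - 1)) \<le> 0" by (simp add: mult_nonneg_nonpos)
    thus ?thesis using hump_nonneg[OF b(1)] by (smt (verit))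
  qed
  show "exp (- a * (x + 1)) * sin (b * (x + 1)) \<le> hump a b (x + 1)"
  proof (cases "x + 1 < pi / b")
    case True thus ?thesis using hump_in[OF b(1), of "x+1" a] x by auto
  next
    case False
    have "pi \<le> b * (x + 1)"
    proof -
      have "b * (pi / b) \<le> b * (x + 1)" using False b by (intro mult_left_mono) auto
      thus ?thesis using b by simp
    qed
    moreover have "b * (x + 1) < 2 * pi"
    proof -
      have "x + 1 < 2 * (pi / b)" using x pb by auto
      hence "b * (x + 1) < b * (2 * (pi / b))" using b by (intro mult_strict_left_mono) auto
      thus ?thesis using b by simp
    qed
    ultimately have "sin (b * (x + 1)) \<le> 0" by (intro sin_le_zero)
    hence "exp (- a * (x + 1)) * sin (b * (x + 1)) \<le> 0" by (simp add: mult_nonneg_nonpos)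
    thus ?thesis using hump_nonneg[OF b(1)] by (smt (verit))
  qed
qed

lemma lap_formula:
  fixes a b x :: real
  shows "exp (- a * (x - 1)) * sin (b * (x - 1)) + exp (- a * (x + 1)) * sin (b * (x + 1))
   = exp (- a * x) * ((exp a + exp (- a)) * cos b * sin (b * x) - (exp a - exp (- a)) * sin b * cos (b * x))"
proof -
  have "exp (- a * (x - 1)) = exp (- a * x + a)" by (simp add: algebra_simps)
  also have "\<dots> = exp (- a * x) * exp a" by (rule exp_add)
  finally have e1: "exp (- a * (x - 1)) = exp (- a * x) * exp a" .
  have "exp (- a * (x + 1)) = exp (- a * x + (- a))" by (simp add: algebra_simps)
  also have "\<dots> = exp (- a * x) * exp (- a)" by (rule exp_add)
  finally have e2: "exp (- a * (x + 1)) = exp (- a * x) * exp (- a)" .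
  have s1: "sin (b * (x - 1)) = sin (b * x) * cos b - cos (b * x) * sin b"
    by (simp add: right_diff_distrib sin_diff)
  have s2: "sin (b * (x + 1)) = sin (b * x) * cos b + cos (b * x) * sin b"
    by (simp add: distrib_left sin_add)
  show ?thesis unfolding e1 e2 s1 s2 by (simp add: algebra_simps)
qed


context epi begin

lemma f_scale: assumes "0 \<le> \<theta>" "\<theta> \<le> 1" "0 \<le> v" shows "\<theta> * f v \<le> f (\<theta> * v)"
proof -
  consider "\<theta> = 0" | "\<theta> = 1" | "v = 0" | "0 < \<theta> \<and> \<theta> < 1 \<and> 0 < v" using assms by linarith
  thus ?thesis
  proof cases
    case 1 thus ?thesis using f_0 by simp
  next
    case 2 thus ?thesis by simp
  next
    case 3 thus ?thesis using f_0 by simp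
  next
    case 4 thus ?thesis using f_conc[of \<theta> v] by auto
  qed
qed

lemma ramp:
  fixes V b \<delta> T x0 :: real
  assumes V: "0 < V" "V < vs" and b: "0 < b" "b \<le> pi"
  and bc: "2 * lam * (1 - cos b) < f V / V"
  and \<delta>: "0 < \<delta>" "\<delta> \<le> V" and T: "0 \<le> T"
  and init: "\<And>k. \<delta> * hump 0 b (real_of_int k - x0) \<le> I T k"
  shows "V * hump 0 b (real_of_int j - x0) \<le> I (T + (V - \<delta>) / ((f V / V - 2 * lam * (1 - cos b)) * \<delta>)) j"
proof -
  define \<kappa> where "\<kappa> = f V / V - 2 * lam * (1 - cos b)"
  define m where "m = \<kappa> * \<delta>"
  have m0: "m > 0" unfolding m_def \<kappa>_def using bc \<delta> by auto
  define \<tau>1 where "\<tau>1 = (V - \<delta>) / m"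
  have \<tau>1: "\<tau>1 \<ge> 0" unfolding \<tau>1_def using m0 \<delta> by auto
  define y where "y s = \<delta> + m * (s - T)" for s
  have yT: "y (T + \<tau>1) = V" unfolding y_def \<tau>1_def using m0 by simp
  have ylo: "\<delta> \<le> y s" if "T \<le> s" for s unfolding y_def using that m0 by auto
  have yhi: "y s \<le> V" if "s \<le> T + \<tau>1" for s
  proof -
    have "m * (s - T) \<le> m * \<tau>1" using that m0 by (intro mult_left_mono) auto
    thus ?thesis using yT unfolding y_def by simp
  qed
  have p01: "0 \<le> hump 0 b x" "hump 0 b x \<le> 1" for x using hump_nonneg[OF b(1)] hump_le1[OF b(1)] by auto
  have "y (T + \<tau>1) * hump 0 b (real_of_int j - x0) \<le> I (T + \<tau>1) j"
  proof (rule cmp_eq[where ta = T and tb = "T + \<tau>1" and u = "\<lambda>s k. y s * hump 0 b (real_of_int k - x0)" and v = I and M = V and a = I0])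
    show "continuous_on {T..T + \<tau>1} (\<lambda>s. y s * hump 0 b (real_of_int k - x0))" for k
      unfolding y_def by (intro continuous_intros)
    show "continuous_on {T..T + \<tau>1} (\<lambda>s. I s k)" for k by (rule I_cont') (use T in auto)
    show "y T * hump 0 b (real_of_int k - x0) \<le> I T k" for k using init[of k] unfolding y_def by simp
    show "y s * hump 0 b (real_of_int k - x0) - I s k \<le> V" if "T \<le> s" "s \<le> T + \<tau>1" for k s
    proof -
      have "y s * hump 0 b (real_of_int k - x0) \<le> V * 1"
        using yhi[of s] ylo[of s] that p01 \<delta> by (intro mult_mono) auto
      moreover have "0 \<le> I s k" using I_nonneg T that by auto
      ultimately show ?thesis by simp
    qed
    show "0 \<le> I s k" if "T < s" for k s using I_nonneg T that by auto
    show "T \<le> T + \<tau>1" "T + \<tau>1 \<le> T + \<tau>1" using \<tau>1 by auto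
    fix k s assume s: "T < s" "s \<le> T + \<tau>1" "I s k < y s * hump 0 b (real_of_int k - x0)"
    define x where "x = real_of_int k - x0"
    have ys: "\<delta> \<le> y s" "y s \<le> V" using ylo yhi s by auto
    have Is: "0 \<le> I s k" using I_nonneg T s by auto
    have "0 < y s * hump 0 b x" using s(3) Is unfolding x_def by linarith
    hence pp: "0 < hump 0 b x" using ys \<delta> by (simp add: zero_less_mult_iff)
    have xin: "0 < x \<and> x < pi / b"
    proof (rule ccontr)
      assume "\<not> (0 < x \<and> x < pi / b)"
      hence "hump 0 b x = 0" using hump_out[OF b(1)] by force
      thus False using pp by simp
    qed
    have px: "hump 0 b x = sin (b * x)" using hump_in[OF b(1)] xin by simp
    have nb1: "sin (b * (x - 1)) \<le> hump 0 b (x - 1)" using hump_nb(1)[OF b, of x 0] xin by simp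
    have nb2: "sin (b * (x + 1)) \<le> hump 0 b (x + 1)" using hump_nb(2)[OF b, of x 0] xin by simp
    have lf: "sin (b * (x - 1)) + sin (b * (x + 1)) = 2 * cos b * sin (b * x)"
      using lap_formula[of 0 x b] by simp
    have xk: "real_of_int (k - 1) - x0 = x - 1" "real_of_int (k + 1) - x0 = x + 1" unfolding x_def by auto
    have dl: "dlap (\<lambda>k. y s * hump 0 b (real_of_int k - x0)) k = y s * (hump 0 b (x - 1) + hump 0 b (x + 1) - 2 * hump 0 b x)"
      unfolding dlap_def xk x_def[symmetric] by (simp add: algebra_simps)
    have "hump 0 b (x - 1) + hump 0 b (x + 1) - 2 * hump 0 b x \<ge> (2 * cos b - 2) * hump 0 b x"
      using nb1 nb2 lf px by (simp add: algebra_simps)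
    hence dl2: "dlap (\<lambda>k. y s * hump 0 b (real_of_int k - x0)) k \<ge> y s * ((2 * cos b - 2) * hump 0 b x)"
      unfolding dl using ys \<delta> by (intro mult_left_mono) auto
    have fy: "f V / V * y s \<le> f (y s)" using f_ratio_ge[of "y s" V] ys \<delta> by (simp add: field_simps)
    have fyp: "hump 0 b x * f (y s) \<le> f (hump 0 b x * y s)" using f_scale p01 ys \<delta> by auto
    have "hump 0 b x * (f V / V * y s) \<le> hump 0 b x * f (y s)" using fy p01 by (intro mult_left_mono) auto
    hence F: "hump 0 b x * (f V / V * y s) \<le> f (y s * hump 0 b x)" using fyp by (simp add: mult.commute)
    have L: "lam * (y s * ((2 * cos b - 2) * hump 0 b x)) \<le> lam * dlap (\<lambda>k. y s * hump 0 b (real_of_int k - x0)) k"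
      using dl2 pos by (intro mult_left_mono) auto
    have "m * hump 0 b x \<le> \<kappa> * y s * hump 0 b x"
    proof -
      have "\<kappa> > 0" using bc unfolding \<kappa>_def by auto
      hence "\<kappa> * \<delta> \<le> \<kappa> * y s" using ys by (intro mult_left_mono) auto
      thus ?thesis unfolding m_def using p01 by (intro mult_right_mono) auto
    qed
    also have "\<kappa> * y s * hump 0 b x = hump 0 b x * (f V / V * y s) + lam * (y s * ((2 * cos b - 2) * hump 0 b x))"
      unfolding \<kappa>_def by (simp add: algebra_simps)
    finally have main: "m * hump 0 b x \<le> f (y s * hump 0 b x) + I0 k + lam * dlap (\<lambda>k. y s * hump 0 b (real_of_int k - x0)) k"
      using F L I0_range[of k] by linarith
    have du: "((\<lambda>s. y s * hump 0 b (real_of_int k - x0)) has_real_derivative m * hump 0 b x) (at s)"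
      unfolding y_def x_def by (auto intro!: derivative_eq_intros)
    show "\<exists>du dv. ((\<lambda>s. y s * hump 0 b (real_of_int k - x0)) has_real_derivative du) (at s) \<and>
          ((\<lambda>s. I s k) has_real_derivative dv) (at s) \<and>
          du \<le> f (y s * hump 0 b (real_of_int k - x0)) + I0 k + lam * dlap (\<lambda>k. y s * hump 0 b (real_of_int k - x0)) k \<and>
          f (I s k) + I0 k + lam * dlap (I s) k \<le> dv"
      using du main I_ode[of s k] s T unfolding x_def by (intro exI[of _ "m * hump 0 b x"] exI[of _ "f (I s k) + I0 k + lam * dlap (I s) k"]) (auto simp: x_def)
  qed
  thus ?thesis using yT unfolding \<tau>1_def m_def \<kappa>_def by simp
qed

end

context epi begin

lemma moving_hump:
  fixes a b c1 r' \<delta>1 t0 x1 t :: real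
  assumes a: "0 \<le> a" and b: "0 < b" "b \<le> pi" and c1: "0 < c1"
  and hb: "c1 * b = lam * (exp a - exp (- a)) * sin b"
  and ha: "c1 * a \<le> r' + lam * ((exp a + exp (- a)) * cos b - 2)"
  and d1: "0 < \<delta>1" and hf: "\<And>v. 0 \<le> v \<Longrightarrow> v \<le> \<delta>1 \<Longrightarrow> r' * v \<le> f v"
  and t0: "0 \<le> t0" and init: "\<And>k. \<delta>1 * hump a b (real_of_int k - c1 * t0 - x1) \<le> I t0 k"
  and t: "t0 \<le> t"
  shows "\<delta>1 * hump a b (real_of_int j - c1 * t - x1) \<le> I t j"
proof (rule cmp_eq[where ta = t0 and tb = t and u = "\<lambda>s k. \<delta>1 * hump a b (real_of_int k - c1 * s - x1)" and v = I and M = \<delta>1 and a = I0])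
  show "continuous_on {t0..t} (\<lambda>s. \<delta>1 * hump a b (real_of_int k - c1 * s - x1))" for k
    by (intro continuous_intros hump_cont)
  show "continuous_on {t0..t} (\<lambda>s. I s k)" for k by (rule I_cont') (use t0 in auto)
  show "\<delta>1 * hump a b (real_of_int k - c1 * t0 - x1) \<le> I t0 k" for k by (rule init)
  show "\<delta>1 * hump a b (real_of_int k - c1 * s - x1) - I s k \<le> \<delta>1" if "t0 \<le> s" "s \<le> t" for k s
  proof -
    have "\<delta>1 * hump a b (real_of_int k - c1 * s - x1) \<le> \<delta>1 * 1"
      using hump_le1[OF b(1) a] d1 by (intro mult_left_mono) auto
    moreover have "0 \<le> I s k" using I_nonneg t0 that by auto
    ultimately show ?thesis by simp
  qed
  show "0 \<le> I s k" if "t0 < s" for k s using I_nonneg t0 that by auto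
  show "t0 \<le> t" "t \<le> t" using t by auto
  fix k s assume s: "t0 < s" "s \<le> t" "I s k < \<delta>1 * hump a b (real_of_int k - c1 * s - x1)"
  define x where "x = real_of_int k - c1 * s - x1"
  have Is: "0 \<le> I s k" using I_nonneg t0 s by auto
  have "0 < \<delta>1 * hump a b x" using s(3) Is unfolding x_def by linarith
  hence pp: "0 < hump a b x" using d1 by (simp add: zero_less_mult_iff)
  have xin: "0 < x \<and> x < pi / b"
  proof (rule ccontr)
    assume "\<not> (0 < x \<and> x < pi / b)"
    hence "hump a b x = 0" using hump_out[OF b(1)] by force
    thus False using pp by simp
  qed
  define Ex where "Ex = exp (- a * x)"
  define S1 where "S1 = sin (b * x)"
  define C1 where "C1 = cos (b * x)"
  have Ex0: "Ex > 0" unfolding Ex_def by simp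
  have S10: "S1 \<ge> 0" unfolding S1_def using xin b by (intro sin_ge_zero) (auto simp: field_simps)
  have px: "hump a b x = Ex * S1" using hump_in[OF b(1)] xin unfolding Ex_def S1_def by simp
  define \<Phi> where "\<Phi> s' = \<delta>1 * (exp (- a * (real_of_int k - c1 * s' - x1)) * sin (b * (real_of_int k - c1 * s' - x1)))" for s'
  have dPhi: "(\<Phi> has_real_derivative \<delta>1 * (Ex * (a * c1) * S1 + Ex * (C1 * (- b * c1)))) (at s)"
    unfolding \<Phi>_def Ex_def S1_def C1_def x_def
    by (auto intro!: derivative_eq_intros simp: algebra_simps)
  define W where "W = {s'. 0 < real_of_int k - c1 * s' - x1 \<and> real_of_int k - c1 * s' - x1 < pi / b}"
  have oW: "open W" unfolding W_def
    by (intro open_Collect_conj open_Collect_less continuous_intros)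
  have sW: "s \<in> W" unfolding W_def using xin x_def by auto
  have eqW: "\<Phi> s' = \<delta>1 * hump a b (real_of_int k - c1 * s' - x1)" if "s' \<in> W" for s'
    using that hump_in[OF b(1)] unfolding W_def \<Phi>_def by auto
  have du: "((\<lambda>s. \<delta>1 * hump a b (real_of_int k - c1 * s - x1)) has_real_derivative \<delta>1 * (Ex * (a * c1) * S1 + Ex * (C1 * (- b * c1)))) (at s)"
    by (rule has_field_derivative_transform_within_open[OF dPhi oW sW eqW])
  have nb1: "exp (- a * (x - 1)) * sin (b * (x - 1)) \<le> hump a b (x - 1)" using hump_nb(1)[OF b, of x a] xin by simp
  have nb2: "exp (- a * (x + 1)) * sin (b * (x + 1)) \<le> hump a b (x + 1)" using hump_nb(2)[OF b, of x a] xin by simp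
  have lf: "exp (- a * (x - 1)) * sin (b * (x - 1)) + exp (- a * (x + 1)) * sin (b * (x + 1))
      = Ex * ((exp a + exp (- a)) * cos b * S1 - (exp a - exp (- a)) * sin b * C1)"
    using lap_formula[of a x b] unfolding Ex_def S1_def C1_def .
  have xk: "real_of_int (k - 1) - c1 * s - x1 = x - 1" "real_of_int (k + 1) - c1 * s - x1 = x + 1" unfolding x_def by auto
  have dl: "dlap (\<lambda>k. \<delta>1 * hump a b (real_of_int k - c1 * s - x1)) k = \<delta>1 * (hump a b (x - 1) + hump a b (x + 1) - 2 * hump a b x)"
    unfolding dlap_def xk x_def[symmetric] by (simp add: algebra_simps)
  have "hump a b (x - 1) + hump a b (x + 1) - 2 * hump a b x \<ge>
      Ex * ((exp a + exp (- a)) * cos b * S1 - (exp a - exp (- a)) * sin b * C1) - 2 * (Ex * S1)"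
    using nb1 nb2 lf px by linarith
  hence dl2: "lam * dlap (\<lambda>k. \<delta>1 * hump a b (real_of_int k - c1 * s - x1)) k \<ge>
      lam * (\<delta>1 * (Ex * ((exp a + exp (- a)) * cos b * S1 - (exp a - exp (- a)) * sin b * C1) - 2 * (Ex * S1)))"
    unfolding dl using d1 pos by (intro mult_left_mono) auto
  have hle: "hump a b x \<le> 1" using hump_le1[OF b(1) a] .
  have fu: "r' * (\<delta>1 * hump a b x) \<le> f (\<delta>1 * hump a b x)"
  proof (rule hf)
    show "0 \<le> \<delta>1 * hump a b x" using d1 pp by auto
    show "\<delta>1 * hump a b x \<le> \<delta>1" using d1 hle by (simp add: mult_le_cancel_left1)
  qed
  have key: "\<delta>1 * (Ex * (a * c1) * S1 + Ex * (C1 * (- b * c1)))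
      \<le> r' * (\<delta>1 * hump a b x) + lam * (\<delta>1 * (Ex * ((exp a + exp (- a)) * cos b * S1 - (exp a - exp (- a)) * sin b * C1) - 2 * (Ex * S1)))"
  proof -
    have pos1: "0 \<le> \<delta>1 * Ex * S1" using d1 Ex0 S10 by auto
    have "0 \<le> (r' + lam * ((exp a + exp (- a)) * cos b - 2) - c1 * a) * (\<delta>1 * Ex * S1)"
      by (rule mult_nonneg_nonneg) (use ha pos1 in auto)
    moreover have "r' * (\<delta>1 * hump a b x) + lam * (\<delta>1 * (Ex * ((exp a + exp (- a)) * cos b * S1 - (exp a - exp (- a)) * sin b * C1) - 2 * (Ex * S1)))
        - \<delta>1 * (Ex * (a * c1) * S1 + Ex * (C1 * (- b * c1)))
        = (r' + lam * ((exp a + exp (- a)) * cos b - 2) - c1 * a) * (\<delta>1 * Ex * S1)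
          + \<delta>1 * Ex * C1 * (c1 * b - lam * (exp a - exp (- a)) * sin b)"
      unfolding px by (simp add: algebra_simps)
    moreover have "c1 * b - lam * (exp a - exp (- a)) * sin b = 0" using hb by simp
    ultimately show ?thesis by simp
  qed
  have main: "\<delta>1 * (Ex * (a * c1) * S1 + Ex * (C1 * (- b * c1)))
      \<le> f (\<delta>1 * hump a b (real_of_int k - c1 * s - x1)) + I0 k + lam * dlap (\<lambda>k. \<delta>1 * hump a b (real_of_int k - c1 * s - x1)) k"
    using key fu dl2 I0_range[of k] unfolding x_def by linarith
  show "\<exists>du dv. ((\<lambda>s. \<delta>1 * hump a b (real_of_int k - c1 * s - x1)) has_real_derivative du) (at s) \<and>
        ((\<lambda>s. I s k) has_real_derivative dv) (at s) \<and>
        du \<le> f (\<delta>1 * hump a b (real_of_int k - c1 * s - x1)) + I0 k + lam * dlap (\<lambda>k. \<delta>1 * hump a b (real_of_int k - c1 * s - x1)) k \<and>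
        f (I s k) + I0 k + lam * dlap (I s) k \<le> dv"
    using du main I_ode[of s k] s t0 by (intro exI[of _ "\<delta>1 * (Ex * (a * c1) * S1 + Ex * (C1 * (- b * c1)))"] exI[of _ "f (I s k) + I0 k + lam * dlap (I s) k"]) auto
qed

end

lemma sinc_right: "((\<lambda>b::real. sin b / b) \<longlongrightarrow> 1) (at_right 0)"
proof -
  have "(sin has_real_derivative cos 0) (at 0)" by (rule DERIV_sin)
  hence "((\<lambda>y. (sin y - sin 0) / (y - 0)) \<longlongrightarrow> 1) (at (0::real))"
    unfolding has_field_derivative_iff by simp
  hence "((\<lambda>y. sin y / y) \<longlongrightarrow> 1) (at (0::real))" by simp
  thus ?thesis by (rule tendsto_mono[OF at_le, rotated]) auto
qed

context epi begin

lemma params: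
  fixes c \<kappa> :: real
  assumes c: "0 < c" "c < c_star s0 \<tau> \<eta> lam" and \<kappa>: "0 < \<kappa>"
  shows "\<exists>a b c1 r' \<delta>1. 0 \<le> a \<and> 0 < b \<and> b \<le> pi / 2 \<and> c < c1 \<and>
     c1 * b = lam * (exp a - exp (- a)) * sin b \<and>
     c1 * a \<le> r' + lam * ((exp a + exp (- a)) * cos b - 2) \<and>
     2 * lam * (1 - cos b) < \<kappa> \<and> 0 < \<delta>1 \<and> (\<forall>v. 0 \<le> v \<and> v \<le> \<delta>1 \<longrightarrow> r' * v \<le> f v)"
proof -
  define g where "g a = lam * (exp a - exp (- a))" for a :: real
  define h where "h a = a * g a - lam * (exp a + exp (- a) - 2)" for a :: real
  have gc: "continuous_on S g" for S unfolding g_def by (intro continuous_intros)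
  have hc: "isCont h x" for x unfolding h_def g_def by (intro continuous_intros)
  define A where "A = c / lam"
  have A0: "0 \<le> A" unfolding A_def using c pos by auto
  have gA: "c \<le> g A"
  proof -
    have "1 + A \<le> exp A" by (rule exp_ge_add_one_self)
    moreover have "exp (- A) \<le> 1" using A0 by simp
    ultimately have "A \<le> exp A - exp (- A)" by linarith
    hence "lam * A \<le> lam * (exp A - exp (- A))" using pos by (intro mult_left_mono) auto
    thus ?thesis unfolding g_def A_def using pos by simp
  qed
  obtain a0 where a0: "0 \<le> a0" "a0 \<le> A" "g a0 = c"
    using IVT'[of g 0 c A] gA A0 gc c unfolding g_def by auto
  have a0p: "0 < a0" using a0 c unfolding g_def by (cases "a0 = 0") auto
  have ha0: "h a0 < r"
  proof (rule ccontr)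
    assume "\<not> h a0 < r"
    hence "r + lam * kk a0 \<le> a0 * c" using a0 unfolding h_def kk_def by (simp add: algebra_simps)
    hence le: "(r + lam * kk a0) / a0 \<le> c" using a0p by (simp add: field_simps)
    have "c_star s0 \<tau> \<eta> lam \<le> (r + lam * kk a0) / a0" unfolding cstar_eq
    proof (rule cINF_lower)
      show "bdd_below ((\<lambda>\<gamma>. (r + lam * kk \<gamma>) / \<gamma>) ` {0<..})"
      proof (rule bdd_belowI[of _ 0])
        fix x assume "x \<in> (\<lambda>\<gamma>. (r + lam * kk \<gamma>) / \<gamma>) ` {0<..}"
        then obtain \<gamma> where "\<gamma> > 0" "x = (r + lam * kk \<gamma>) / \<gamma>" by auto
        moreover have "r + lam * kk \<gamma> \<ge> 0" using r_pos pos kk_pos[of \<gamma>] by auto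
        ultimately show "0 \<le> x" by auto
      qed
      show "a0 \<in> {0<..}" using a0p by auto
    qed
    thus False using le c by auto
  qed
  have "\<forall>\<^sub>F a in at_right a0. h a < r"
  proof -
    have "(h \<longlongrightarrow> h a0) (at a0)" using hc[of a0] by (simp add: isCont_def)
    hence "(h \<longlongrightarrow> h a0) (at_right a0)" by (rule tendsto_mono[OF at_le, rotated]) auto
    thus ?thesis using ha0 by (rule order_tendstoD)
  qed
  moreover have "\<forall>\<^sub>F a in at_right a0. a0 < a" by (rule eventually_at_right_less)
  ultimately have "\<forall>\<^sub>F a in at_right a0. h a < r \<and> a0 < a" by (rule eventually_conj)
  then obtain a where a: "h a < r" "a0 < a" using eventually_happens'[of "at_right a0"] by auto
  have ga: "c < g a"
  proof -
    have "exp a0 < exp a" "exp (- a) < exp (- a0)" using a by auto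
    hence "exp a0 - exp (- a0) < exp a - exp (- a)" by linarith
    hence "lam * (exp a0 - exp (- a0)) < lam * (exp a - exp (- a))" using pos by (intro mult_strict_left_mono) auto
    thus ?thesis using a0 unfolding g_def by simp
  qed
  define r' where "r' = (h a + r) / 2"
  have r'a: "h a < r'" "r' < r" unfolding r'_def using a by auto
  have E1: "\<forall>\<^sub>F b in at_right 0. (0::real) < b" by (rule eventually_at_right_less)
  have E2: "\<forall>\<^sub>F b in at_right 0. b < pi / 2"
  proof -
    have "((\<lambda>b::real. b) \<longlongrightarrow> 0) (at_right 0)" by (rule tendsto_ident_at)
    thus ?thesis by (rule order_tendstoD) auto
  qed
  have E3: "\<forall>\<^sub>F b in at_right 0. c < g a * (sin b / b)"
  proof -
    have "((\<lambda>b. g a * (sin b / b)) \<longlongrightarrow> g a * 1) (at_right 0)" by (intro tendsto_intros sinc_right)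
    thus ?thesis using ga by (intro order_tendstoD) auto
  qed
  have E4: "\<forall>\<^sub>F b in at_right 0. g a * (sin b / b) * a - lam * ((exp a + exp (- a)) * cos b - 2) < r'"
  proof -
    have "((\<lambda>b. g a * (sin b / b) * a - lam * ((exp a + exp (- a)) * cos b - 2)) \<longlongrightarrow>
        g a * 1 * a - lam * ((exp a + exp (- a)) * cos 0 - 2)) (at_right 0)"
      by (intro tendsto_intros sinc_right)
    moreover have "g a * 1 * a - lam * ((exp a + exp (- a)) * cos 0 - 2) = h a" unfolding h_def by (simp add: algebra_simps)
    ultimately show ?thesis using r'a by (intro order_tendstoD) auto
  qed
  have E5: "\<forall>\<^sub>F b in at_right 0. 2 * lam * (1 - cos b) < \<kappa>"
  proof -
    have "((\<lambda>b. 2 * lam * (1 - cos b)) \<longlongrightarrow> 2 * lam * (1 - cos 0)) (at_right (0::real))"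
      by (intro tendsto_intros)
    thus ?thesis using \<kappa> by (intro order_tendstoD) auto
  qed
  have "\<forall>\<^sub>F b in at_right 0. 0 < b \<and> b < pi / 2 \<and> c < g a * (sin b / b) \<and>
     g a * (sin b / b) * a - lam * ((exp a + exp (- a)) * cos b - 2) < r' \<and> 2 * lam * (1 - cos b) < \<kappa>"
    using E1 E2 E3 E4 E5 by eventually_elim auto
  then obtain b where b: "0 < b" "b < pi / 2" "c < g a * (sin b / b)"
     "g a * (sin b / b) * a - lam * ((exp a + exp (- a)) * cos b - 2) < r'" "2 * lam * (1 - cos b) < \<kappa>"
    using eventually_happens'[of "at_right (0::real)"] by auto
  obtain \<delta>1 where d1: "\<delta>1 > 0" "\<forall>v. 0 \<le> v \<and> v \<le> \<delta>1 \<longrightarrow> r' * v \<le> f v"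
    using f_small[OF r'a(2)] by auto
  define c1 where "c1 = g a * (sin b / b)"
  have "c1 * b = lam * (exp a - exp (- a)) * sin b" unfolding c1_def g_def using b by simp
  moreover have "c1 * a \<le> r' + lam * ((exp a + exp (- a)) * cos b - 2)" using b(4) unfolding c1_def by simp
  moreover have "0 \<le> a" using a a0p by auto
  moreover have "c < c1" using b(3) unfolding c1_def .
  moreover have "b \<le> pi / 2" using b(2) by simp
  ultimately show ?thesis using b(1) b(5) d1
    apply (rule_tac exI[of _ a], rule_tac exI[of _ b], rule_tac exI[of _ c1], rule_tac exI[of _ r'], rule_tac exI[of _ \<delta>1])
    by blast
qed

end

context epi begin

lemma spread_pos:
  fixes V c :: real
  assumes V: "0 < V" "V < vs" and c: "0 < c" "c < c_star s0 \<tau> \<eta> lam"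
  shows "\<exists>T0 J0. \<forall>t j. T0 \<le> t \<longrightarrow> J0 \<le> real_of_int j \<longrightarrow> real_of_int j \<le> c * t \<longrightarrow> V \<le> I t j"
proof -
  define \<kappa> where "\<kappa> = f V / V"
  have \<kappa>: "\<kappa> > 0" unfolding \<kappa>_def using f_pos_below V by auto
  obtain a b c1 r' \<delta>1' where P: "0 \<le> a" "0 < b" "b \<le> pi / 2" "c < c1"
     "c1 * b = lam * (exp a - exp (- a)) * sin b"
     "c1 * a \<le> r' + lam * ((exp a + exp (- a)) * cos b - 2)"
     "2 * lam * (1 - cos b) < \<kappa>" "0 < \<delta>1'" "\<forall>v. 0 \<le> v \<and> v \<le> \<delta>1' \<longrightarrow> r' * v \<le> f v"
    using params[OF c \<kappa>] by blast
  have "b * 2 \<le> pi" using P(3) by (simp add: field_simps)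
  hence bpi: "b \<le> pi" using P(2) by linarith
  have c1: "0 < c1" using P(4) c by auto
  define W where "W = {k::int. c1 < real_of_int k \<and> real_of_int k < c1 + pi / b}"
  have finW: "finite W"
  proof -
    have "W \<subseteq> {\<lfloor>c1\<rfloor> .. \<lceil>c1 + pi / b\<rceil>}" unfolding W_def by (auto simp: floor_le_iff le_ceiling_iff less_imp_le)
    thus ?thesis by (rule finite_subset) simp
  qed
  define m0 where "m0 = Min (insert 1 ((\<lambda>k. I 1 k) ` W))"
  have m0: "0 < m0" unfolding m0_def using finW I_pos by (subst Min_gr_iff) auto
  have m0le: "m0 \<le> I 1 k" if "k \<in> W" for k unfolding m0_def using finW that by (intro Min_le) auto
  define \<delta>1 where "\<delta>1 = min \<delta>1' m0"
  have d1: "0 < \<delta>1" unfolding \<delta>1_def using m0 P(8) by auto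
  have hf: "r' * v \<le> f v" if "0 \<le> v" "v \<le> \<delta>1" for v using P(9) that unfolding \<delta>1_def by auto
  have init: "\<delta>1 * hump a b (real_of_int k - c1 * 1 - 0) \<le> I 1 k" for k
  proof (cases "k \<in> W")
    case True
    have "\<delta>1 * hump a b (real_of_int k - c1 * 1 - 0) \<le> \<delta>1 * 1"
      using hump_le1[OF P(2) P(1)] d1 by (intro mult_left_mono) auto
    also have "\<dots> \<le> I 1 k" using m0le[OF True] unfolding \<delta>1_def by simp
    finally show ?thesis .
  next
    case False
    hence "real_of_int k - c1 \<le> 0 \<or> pi / b \<le> real_of_int k - c1" unfolding W_def by auto
    hence "hump a b (real_of_int k - c1 * 1 - 0) = 0" using hump_out[OF P(2)] by simp
    thus ?thesis using I_nonneg[of 1 k] by simp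
  qed
  have mh: "\<delta>1 * hump a b (real_of_int k - c1 * t - 0) \<le> I t k" if "1 \<le> t" for t k
    by (rule moving_hump[OF P(1) P(2) bpi c1 P(5) P(6) d1 hf _ init that]) auto
  define \<delta> where "\<delta> = min (\<delta>1 * exp (- a * (pi / b))) V"
  have \<delta>: "0 < \<delta>" "\<delta> \<le> V" unfolding \<delta>_def using d1 V by auto
  have hinit: "\<delta> * hump 0 b (real_of_int k - c1 * t) \<le> I t k" if "1 \<le> t" for t k
  proof -
    have h0: "0 \<le> hump 0 b (real_of_int k - c1 * t)" by (rule hump_nonneg[OF P(2)])
    have "\<delta> * hump 0 b (real_of_int k - c1 * t) \<le> \<delta>1 * exp (- a * (pi / b)) * hump 0 b (real_of_int k - c1 * t)"
      unfolding \<delta>_def using h0 by (intro mult_right_mono) auto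
    also have "\<dots> \<le> \<delta>1 * hump a b (real_of_int k - c1 * t)"
      using hump_ge0[OF P(2) P(1), of "real_of_int k - c1 * t"] d1 by (simp add: mult.assoc mult_left_mono)
    also have "\<dots> \<le> I t k" using mh[OF that, of k] by simp
    finally show ?thesis .
  qed
  define \<tau>1 where "\<tau>1 = (V - \<delta>) / ((f V / V - 2 * lam * (1 - cos b)) * \<delta>)"
  have \<tau>1: "0 \<le> \<tau>1" unfolding \<tau>1_def using \<delta> P(7) unfolding \<kappa>_def by auto
  have rampt: "V * hump 0 b (real_of_int j - c1 * t) \<le> I (t + \<tau>1) j" if "1 \<le> t" for t j
    unfolding \<tau>1_def
    by (rule ramp[OF V P(2) bpi _ \<delta>]) (use P(7) that hinit in \<open>auto simp: \<kappa>_def\<close>)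
  define J0 where "J0 = c1 + pi / (2 * b)"
  define T0 where "T0 = \<tau>1 * c1 / (c1 - c)"
  have main: "V \<le> I s j" if s: "T0 \<le> s" and j1: "J0 \<le> real_of_int j" and j2: "real_of_int j \<le> c * s" for s j
  proof -
    define t where "t = (real_of_int j - pi / (2 * b)) / c1"
    have t1: "1 \<le> t" unfolding t_def using j1 c1 unfolding J0_def by (simp add: field_simps)
    have jt: "real_of_int j - c1 * t = pi / (2 * b)" unfolding t_def using c1 by (simp add: field_simps)
    have hb: "hump 0 b (pi / (2 * b)) = 1"
    proof -
      have "0 < pi / (2 * b)" "pi / (2 * b) < pi / b" using P(2) by (auto simp: field_simps)
      hence "hump 0 b (pi / (2 * b)) = sin (b * (pi / (2 * b)))" using hump_in[OF P(2)] by simp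
      also have "b * (pi / (2 * b)) = pi / 2" using P(2) by (simp add: field_simps)
      finally show ?thesis by simp
    qed
    have "V \<le> I (t + \<tau>1) j" using rampt[OF t1, of j] jt hb by simp
    also have "I (t + \<tau>1) j \<le> I s j"
    proof (rule I_mono)
      show "0 \<le> t + \<tau>1" using t1 \<tau>1 by auto
      have "t \<le> real_of_int j / c1" unfolding t_def using P(2) c1 by (simp add: divide_right_mono)
      also have "\<dots> \<le> c * s / c1" using j2 c1 by (simp add: divide_right_mono)
      finally have "t \<le> c * s / c1" .
      moreover have "\<tau>1 \<le> s - c * s / c1"
      proof -
        have "\<tau>1 * c1 / (c1 - c) \<le> s" using s unfolding T0_def .
        hence "\<tau>1 * c1 \<le> s * (c1 - c)" using P(4) by (simp add: field_simps)
        hence "\<tau>1 \<le> s * (c1 - c) / c1" using c1 by (simp add: pos_le_divide_eq)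
        moreover have "s * (c1 - c) / c1 = s - c * s / c1" using c1 by (simp add: field_simps)
        ultimately show ?thesis by simp
      qed
      ultimately show "t + \<tau>1 \<le> s" by linarith
    qed
    finally show "V \<le> I s j" .
  qed
  show ?thesis using main by blast
qed

end

context epi begin

lemma epi_reflect: "epi s0 \<tau> \<eta> lam (\<lambda>j. I0 (-j)) (\<lambda>j. Iinf (-j)) (\<lambda>t j. I t (-j))"
proof (unfold_locales)
  show "0 < s0" "s0 < 1" "0 < \<tau>" "0 < \<eta>" "0 < lam" using s0 pos by auto
  show "finite {j. I0 (- j) \<noteq> 0}"
  proof -
    have "{j. I0 (- j) \<noteq> 0} = uminus ` {j. I0 j \<noteq> 0}" by (force simp: image_iff)
    thus ?thesis using I0_fin by simp
  qed
  show "0 \<le> I0 (- j) \<and> I0 (- j) < 1" for j using I0_range by auto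
  show "\<exists>j. 0 < I0 (- j)" using I0_nz by (metis minus_minus)
  show "1 < R0 s0 \<tau> \<eta>" by (rule R0_gt)
  show "0 < Iinf (- j)" for j by (rule Iinf_pos)
  show "bounded (range (\<lambda>j. Iinf (- j)))"
    by (rule bounded_subset[OF Iinf_bdd]) auto
  show "0 = f (Iinf (- j)) + I0 (- j) + lam * dlap (\<lambda>j. Iinf (- j)) j" for j
  proof -
    have e: "- (j - 1) = - j + 1" "- (j + 1) = - j - 1" by simp_all
    have "dlap (\<lambda>j. Iinf (- j)) j = Iinf (- j + 1) - 2 * Iinf (- j) + Iinf (- j - 1)" unfolding dlap_def e by simp
    moreover have "dlap Iinf (- j) = Iinf (- j - 1) - 2 * Iinf (- j) + Iinf (- j + 1)" unfolding dlap_def by simp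
    ultimately have "dlap (\<lambda>j. Iinf (- j)) j = dlap Iinf (- j)" by simp
    thus ?thesis using Iinf_eq[of "-j"] by simp
  qed
  show "continuous_on {0..} (\<lambda>t. I t (- j))" for j by (rule I_cont)
  show "((\<lambda>s. I s (- j)) has_real_derivative f (I t (- j)) + I0 (- j) + lam * dlap (\<lambda>j. I t (- j)) j) (at t)"
    if "0 < t" for j t
  proof -
    have e: "- (j - 1) = - j + 1" "- (j + 1) = - j - 1" by simp_all
    have "dlap (\<lambda>j. I t (- j)) j = I t (- j + 1) - 2 * I t (- j) + I t (- j - 1)" unfolding dlap_def e by simp
    moreover have "dlap (I t) (- j) = I t (- j - 1) - 2 * I t (- j) + I t (- j + 1)" unfolding dlap_def by simp
    ultimately have "dlap (\<lambda>j. I t (- j)) j = dlap (I t) (- j)" by simp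
    thus ?thesis using I_ode[OF that, of "-j"] by simp
  qed
  show "I 0 (- j) = 0" for j by (rule I_init)
  show "bounded {I t (- j) |t j. 0 \<le> t \<and> t \<le> T}" for T
    by (rule bounded_subset[OF I_bdd[of T]]) blast
qed

lemma spread:
  fixes V c :: real
  assumes V: "0 < V" "V < vs" and c: "0 < c" "c < c_star s0 \<tau> \<eta> lam"
  shows "\<exists>T0 J0. \<forall>t j. T0 \<le> t \<longrightarrow> J0 \<le> real_of_int \<bar>j\<bar> \<longrightarrow> real_of_int \<bar>j\<bar> \<le> c * t \<longrightarrow> V \<le> I t j"
proof -
  interpret R: epi s0 \<tau> \<eta> lam "\<lambda>j. I0 (-j)" "\<lambda>j. Iinf (-j)" "\<lambda>t j. I t (-j)" by (rule epi_reflect)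
  have vsR: "R.vs = vs" unfolding R.vs_def vs_def ..
  obtain T1 J1 where 1: "\<forall>t j. T1 \<le> t \<longrightarrow> J1 \<le> real_of_int j \<longrightarrow> real_of_int j \<le> c * t \<longrightarrow> V \<le> I t j"
    using spread_pos[OF V c] by blast
  obtain T2 J2 where 2: "\<forall>t j. T2 \<le> t \<longrightarrow> J2 \<le> real_of_int j \<longrightarrow> real_of_int j \<le> c * t \<longrightarrow> V \<le> I t (- j)"
    using R.spread_pos[of V c] V c vsR by auto
  have "V \<le> I t j" if "max T1 T2 \<le> t" "max J1 J2 \<le> real_of_int \<bar>j\<bar>" "real_of_int \<bar>j\<bar> \<le> c * t" for t j
  proof (cases "j \<ge> 0")
    case True thus ?thesis using 1 that by auto
  next
    case False
    hence "V \<le> I t (- (- j))" using 2[rule_format, of t "-j"] that by auto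
    thus ?thesis by simp
  qed
  thus ?thesis by blast
qed

end

context epi begin

lemma ramp_center:
  fixes V :: real
  assumes V: "0 < V" "V < vs"
  shows "\<exists>T. \<forall>t. T \<le> t \<longrightarrow> V \<le> I t j"
proof -
  define \<kappa> where "\<kappa> = f V / V"
  have \<kappa>: "\<kappa> > 0" unfolding \<kappa>_def using f_pos_below V by auto
  have E1: "\<forall>\<^sub>F b in at_right 0. (0::real) < b" by (rule eventually_at_right_less)
  have E2: "\<forall>\<^sub>F b in at_right 0. b < pi"
  proof -
    have "((\<lambda>b::real. b) \<longlongrightarrow> 0) (at_right 0)" by (rule tendsto_ident_at)
    thus ?thesis by (rule order_tendstoD) auto
  qed
  have E5: "\<forall>\<^sub>F b in at_right 0. 2 * lam * (1 - cos b) < \<kappa>"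
  proof -
    have "((\<lambda>b. 2 * lam * (1 - cos b)) \<longlongrightarrow> 2 * lam * (1 - cos 0)) (at_right (0::real))"
      by (intro tendsto_intros)
    thus ?thesis using \<kappa> by (intro order_tendstoD) auto
  qed
  have "\<forall>\<^sub>F b in at_right 0. 0 < b \<and> b < pi \<and> 2 * lam * (1 - cos b) < \<kappa>"
    using E1 E2 E5 by eventually_elim auto
  then obtain b where b: "0 < b" "b < pi" "2 * lam * (1 - cos b) < \<kappa>"
    using eventually_happens'[of "at_right (0::real)"] by auto
  define x0 where "x0 = real_of_int j - pi / (2 * b)"
  define W where "W = {k::int. x0 < real_of_int k \<and> real_of_int k < x0 + pi / b}"
  have finW: "finite W"
  proof -
    have "W \<subseteq> {\<lfloor>x0\<rfloor> .. \<lceil>x0 + pi / b\<rceil>}" unfolding W_def by (auto simp: floor_le_iff le_ceiling_iff less_imp_le)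
    thus ?thesis by (rule finite_subset) simp
  qed
  define m0 where "m0 = Min (insert 1 ((\<lambda>k. I 1 k) ` W))"
  have m0: "0 < m0" unfolding m0_def using finW I_pos by (subst Min_gr_iff) auto
  have m0le: "m0 \<le> I 1 k" if "k \<in> W" for k unfolding m0_def using finW that by (intro Min_le) auto
  define \<delta> where "\<delta> = min V m0"
  have \<delta>: "0 < \<delta>" "\<delta> \<le> V" unfolding \<delta>_def using m0 V by auto
  have init: "\<delta> * hump 0 b (real_of_int k - x0) \<le> I 1 k" for k
  proof (cases "k \<in> W")
    case True
    have "\<delta> * hump 0 b (real_of_int k - x0) \<le> \<delta> * 1"
      using hump_le1[OF b(1), of 0] \<delta> by (intro mult_left_mono) auto
    also have "\<dots> \<le> I 1 k" using m0le[OF True] unfolding \<delta>_def by simp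
    finally show ?thesis .
  next
    case False
    hence "real_of_int k - x0 \<le> 0 \<or> pi / b \<le> real_of_int k - x0" unfolding W_def by auto
    hence "hump 0 b (real_of_int k - x0) = 0" using hump_out[OF b(1)] by simp
    thus ?thesis using I_nonneg[of 1 k] by simp
  qed
  define \<tau>1 where "\<tau>1 = (V - \<delta>) / ((f V / V - 2 * lam * (1 - cos b)) * \<delta>)"
  have \<tau>1: "0 \<le> \<tau>1" unfolding \<tau>1_def using \<delta> b(3) unfolding \<kappa>_def by auto
  have "V * hump 0 b (real_of_int j - x0) \<le> I (1 + \<tau>1) j"
    unfolding \<tau>1_def by (rule ramp[OF V b(1) _ _ \<delta>]) (use b init in \<open>auto simp: \<kappa>_def\<close>)
  moreover have "hump 0 b (real_of_int j - x0) = 1"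
  proof -
    have "0 < pi / (2 * b)" "pi / (2 * b) < pi / b" using b by (auto simp: field_simps)
    hence "hump 0 b (pi / (2 * b)) = sin (b * (pi / (2 * b)))" using hump_in[OF b(1)] by simp
    also have "b * (pi / (2 * b)) = pi / 2" using b by (simp add: field_simps)
    finally show ?thesis unfolding x0_def by simp
  qed
  ultimately have "V \<le> I (1 + \<tau>1) j" by simp
  hence "V \<le> I t j" if "1 + \<tau>1 \<le> t" for t using I_mono[of "1 + \<tau>1" t j] \<tau>1 that by auto
  thus ?thesis by blast
qed

definition P where "P j = (SUP n. I (real n) j)"

lemma I_seq_bdd: "bdd_above (range (\<lambda>n. I (real n) j))"
  using I_le_Iinf by (intro bdd_aboveI[of _ "Iinf j"]) auto

lemma I_seq_inc: "incseq (\<lambda>n. I (real n) j)"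
  by (rule incseq_SucI) (use I_mono in auto)

lemma P_lim: "(\<lambda>n. I (real n) j) \<longlonglongrightarrow> P j"
  unfolding P_def by (rule LIMSEQ_incseq_SUP[OF I_seq_bdd I_seq_inc])

lemma I_le_P: assumes "0 \<le> t" shows "I t j \<le> P j"
proof -
  have "I t j \<le> I (real (nat \<lceil>t\<rceil>)) j" using assms by (intro I_mono) auto
  also have "\<dots> \<le> P j" unfolding P_def by (rule cSUP_upper[OF _ I_seq_bdd]) auto
  finally show ?thesis .
qed

lemma P_le_Iinf: "P j \<le> Iinf j"
  unfolding P_def using I_le_Iinf by (intro cSUP_least) auto

lemma P_ge_vs: "vs \<le> P j"
proof (rule ccontr)
  assume "\<not> vs \<le> P j"
  hence lt: "P j < vs" by simp
  define V where "V = (max (P j) (vs / 2) + vs) / 2"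
  have V: "0 < V" "V < vs" "P j < V" unfolding V_def using lt vs by auto
  obtain T where T: "\<forall>t. T \<le> t \<longrightarrow> V \<le> I t j" using ramp_center[OF V(1,2)] by blast
  have "V \<le> I (max T 0) j" using T by auto
  also have "\<dots> \<le> P j" by (rule I_le_P) simp
  finally show False using V by simp
qed

lemma P_stat: "0 = f (P j) + I0 j + lam * dlap P j"
proof -
  define F where "F t = f (I t j) + I0 j + lam * dlap (I t) j" for t
  have "\<forall>n::nat. \<exists>\<xi>. real n < \<xi> \<and> \<xi> < real n + 1 \<and> I (real n + 1) j - I (real n) j = F \<xi>"
  proof
    fix n :: nat
    have cont: "continuous_on {real n..real n + 1} (\<lambda>t. I t j)" by (rule I_cont') simp
    have dif: "(\<lambda>t. I t j) differentiable at x" if "real n < x" "x < real n + 1" for x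
      using I_ode[of x j] that real_differentiable_def by (metis of_nat_0_le_iff le_less_trans)
    obtain l z where z: "real n < z" "z < real n + 1" "((\<lambda>t. I t j) has_real_derivative l) (at z)"
        "I (real n + 1) j - I (real n) j = (real n + 1 - real n) * l"
      using MVT[OF _ cont dif] by auto
    have "l = F z" using DERIV_unique[OF z(3) I_ode[of z j]] z unfolding F_def by (metis of_nat_0_le_iff le_less_trans)
    thus "\<exists>\<xi>. real n < \<xi> \<and> \<xi> < real n + 1 \<and> I (real n + 1) j - I (real n) j = F \<xi>" using z by auto
  qed
  then obtain \<xi> where \<xi>: "\<And>n. real n < \<xi> n" "\<And>n. \<xi> n < real n + 1" "\<And>n. I (real n + 1) j - I (real n) j = F (\<xi> n)"
    by metis
  have conv: "(\<lambda>n. I (\<xi> n) k) \<longlonglongrightarrow> P k" for k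
  proof (rule tendsto_sandwich[OF _ _ P_lim[of k]])
    show "\<forall>\<^sub>F n in sequentially. I (real n) k \<le> I (\<xi> n) k" using \<xi>(1) by (intro always_eventually allI I_mono) (auto intro: less_imp_le)
    show "\<forall>\<^sub>F n in sequentially. I (\<xi> n) k \<le> I (real (Suc n)) k"
    proof (intro always_eventually allI)
      fix n
      have "0 \<le> \<xi> n" using \<xi>(1)[of n] of_nat_0_le_iff[of n] by linarith
      moreover have "\<xi> n \<le> real (Suc n)" using \<xi>(2)[of n] by simp
      ultimately show "I (\<xi> n) k \<le> I (real (Suc n)) k" by (rule I_mono)
    qed
    show "(\<lambda>n. I (real (Suc n)) k) \<longlonglongrightarrow> P k" using P_lim[of k] by (rule LIMSEQ_Suc)
  qed
  have fcont: "isCont f x" for x unfolding epi_f_def by (intro continuous_intros)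
  have "(\<lambda>n. F (\<xi> n)) \<longlonglongrightarrow> f (P j) + I0 j + lam * dlap P j"
    unfolding F_def dlap_def
    by (intro tendsto_intros conv isCont_tendsto_compose[OF fcont])
  moreover have "(\<lambda>n. F (\<xi> n)) \<longlonglongrightarrow> P j - P j"
  proof -
    have eq: "(\<lambda>n. F (\<xi> n)) = (\<lambda>n. I (real (Suc n)) j - I (real n) j)"
      by (rule ext) (use \<xi>(3) in \<open>simp add: add.commute\<close>)
    show ?thesis unfolding eq by (intro tendsto_intros LIMSEQ_Suc P_lim)
  qed
  ultimately have "f (P j) + I0 j + lam * dlap P j = P j - P j" by (rule LIMSEQ_unique)
  thus ?thesis by simp
qed

lemma P_eq: "P j = Iinf j"
proof (rule ccontr)
  assume ne: "P j \<noteq> Iinf j"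
  hence lt: "P j < Iinf j" using P_le_Iinf[of j] by auto
  define \<rho> where "\<rho> k = P k / Iinf k" for k
  have \<rho>1: "\<rho> j < 1" unfolding \<rho>_def using lt Iinf_pos[of j] by simp
  have \<rho>pos: "0 < \<rho> k" for k unfolding \<rho>_def using P_ge_vs[of k] vs Iinf_pos[of k] by auto
  define e where "e = vs * (1 - \<rho> j) / 4"
  have e: "e > 0" unfolding e_def using \<rho>1 vs by auto
  obtain R where R: "\<And>k. R \<le> real_of_int \<bar>k\<bar> \<Longrightarrow> Iinf k \<le> vs + 2 * e" using Iinf_upper[OF e] by blast
  have far: "\<rho> j < \<rho> k" if "R \<le> real_of_int \<bar>k\<bar>" for k
  proof -
    have Ik: "0 < Iinf k" "Iinf k \<le> vs + 2 * e" using R[OF that] Iinf_pos by auto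
    have "vs / (vs + 2 * e) \<le> P k / Iinf k"
      using P_ge_vs[of k] Ik vs e by (simp add: frac_le)
    moreover have "\<rho> j < vs / (vs + 2 * e)"
    proof -
      have "\<rho> j * (vs + 2 * e) < vs"
      proof -
        have "\<rho> j * (vs + 2 * e) = \<rho> j * vs + \<rho> j * vs * (1 - \<rho> j) / 2" unfolding e_def by (simp add: field_simps)
        also have "\<dots> \<le> \<rho> j * vs + vs * (1 - \<rho> j) / 2" using \<rho>1 \<rho>pos[of j] vs by (simp add: mult_right_le_one_le)
        also have "\<dots> < vs"
        proof -
          have "\<rho> j * vs < 1 * vs" using \<rho>1 vs by (intro mult_strict_right_mono) auto
          moreover have "vs * (1 - \<rho> j) = vs - \<rho> j * vs" by (simp add: algebra_simps)
          ultimately show ?thesis by linarith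
        qed
        finally show ?thesis .
      qed
      thus ?thesis using vs e by (simp add: field_simps)
    qed
    ultimately show ?thesis unfolding \<rho>_def by simp
  qed
  define Wf where "Wf = {k::int. real_of_int \<bar>k\<bar> < R}"
  have finWf: "finite Wf"
  proof -
    have "Wf \<subseteq> {-\<lceil>R\<rceil> .. \<lceil>R\<rceil>}" unfolding Wf_def by (auto simp: abs_less_iff) linarith+
    thus ?thesis by (rule finite_subset) simp
  qed
  have jW: "j \<in> Wf" using far[of j] unfolding Wf_def by force
  define m where "m = Min (\<rho> ` Wf)"
  have "m \<in> \<rho> ` Wf" unfolding m_def using finWf jW by (intro Min_in) auto
  then obtain jm where jm: "jm \<in> Wf" "\<rho> jm = m" by auto
  have mle: "m \<le> \<rho> k" for k
  proof (cases "k \<in> Wf")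
    case True thus ?thesis unfolding m_def using finWf by simp
  next
    case False
    hence "\<rho> j < \<rho> k" using far unfolding Wf_def by force
    moreover have "m \<le> \<rho> j" unfolding m_def using finWf jW by simp
    ultimately show ?thesis by simp
  qed
  have m1: "m < 1" using mle[of j] \<rho>1 by simp
  have m0: "0 < m" using jm \<rho>pos by metis
  have Pk: "m * Iinf k \<le> P k" for k using mle[of k] Iinf_pos[of k] unfolding \<rho>_def by (simp add: field_simps)
  have Pjm: "P jm = m * Iinf jm" using jm(2) Iinf_pos[of jm] unfolding \<rho>_def by (simp add: field_simps)
  have "0 = f (P jm) + I0 jm + lam * (P (jm - 1) - 2 * P jm + P (jm + 1))" using P_stat[of jm] unfolding dlap_def .
  also have "\<dots> \<ge> f (m * Iinf jm) + I0 jm + lam * (m * Iinf (jm - 1) - 2 * (m * Iinf jm) + m * Iinf (jm + 1))"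
  proof -
    have "m * Iinf (jm - 1) - 2 * (m * Iinf jm) + m * Iinf (jm + 1) \<le> P (jm - 1) - 2 * P jm + P (jm + 1)"
      using Pk[of "jm - 1"] Pk[of "jm + 1"] Pjm by simp
    hence "lam * (m * Iinf (jm - 1) - 2 * (m * Iinf jm) + m * Iinf (jm + 1)) \<le> lam * (P (jm - 1) - 2 * P jm + P (jm + 1))"
      using pos by (intro mult_left_mono) auto
    thus ?thesis using Pjm by simp
  qed
  also have "lam * (m * Iinf (jm - 1) - 2 * (m * Iinf jm) + m * Iinf (jm + 1)) = m * (lam * dlap Iinf jm)"
    unfolding dlap_def by (simp add: algebra_simps)
  also have "m * (lam * dlap Iinf jm) = - m * (f (Iinf jm) + I0 jm)"
  proof -
    have "lam * dlap Iinf jm = - (f (Iinf jm) + I0 jm)" using Iinf_eq[of jm] by linarith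
    thus ?thesis by (simp only: mult_minus_left mult_minus_right)
  qed
  finally have "f (m * Iinf jm) - m * f (Iinf jm) + (1 - m) * I0 jm \<le> 0" by (simp add: algebra_simps)
  moreover have "f (m * Iinf jm) > m * f (Iinf jm)" using f_conc[OF m0 m1 Iinf_pos[of jm]] .
  moreover have "(1 - m) * I0 jm \<ge> 0" using m1 I0_range[of jm] by auto
  ultimately show False by linarith
qed

lemma I_conv: "\<forall>\<^sub>F t in at_top. Iinf j - e \<le> I t j" if "e > 0"
proof -
  have "\<forall>\<^sub>F n in sequentially. P j - e < I (real n) j"
    using P_lim[of j] that by (intro order_tendstoD) auto
  then obtain N where N: "P j - e < I (real N) j" using eventually_sequentially by auto
  show ?thesis unfolding eventually_at_top_linorder
  proof (intro exI[of _ "real N"] allI impI)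
    fix t assume "real N \<le> t"
    hence "I (real N) j \<le> I t j" by (intro I_mono) auto
    thus "Iinf j - e \<le> I t j" using N P_eq[of j] by simp
  qed
qed

end

context epi begin

lemma part1:
  assumes c: "0 < c" "c < c_star s0 \<tau> \<eta> lam"
  shows "Limsup at_top (\<lambda>t. SUP j\<in>{j. real_of_int \<bar>j\<bar> \<le> c * t}. ereal \<bar>I t j - Iinf j\<bar>) = 0"
proof (rule limsup_zero)
  show "\<forall>\<^sub>F t in at_top. {j. real_of_int \<bar>j\<bar> \<le> c * t} \<noteq> {}"
    unfolding eventually_at_top_linorder
  proof (intro exI[of _ 0] allI impI)
    fix t :: real assume "0 \<le> t"
    hence "(0::int) \<in> {j. real_of_int \<bar>j\<bar> \<le> c * t}" using c by simp
    thus "{j. real_of_int \<bar>j\<bar> \<le> c * t} \<noteq> {}" by blast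
  qed
  fix e :: real assume e: "e > 0"
  obtain R where R: "\<And>j. R \<le> real_of_int \<bar>j\<bar> \<Longrightarrow> Iinf j \<le> vs + 2 * (e / 4)"
  proof -
    have "e / 4 > 0" using e by simp
    from Iinf_upper[OF this] show ?thesis using that by blast
  qed
  define V where "V = max (vs / 2) (vs - e / 2)"
  have V: "0 < V" "V < vs" "vs - e / 2 \<le> V" unfolding V_def using vs e by auto
  obtain T0 J0 where TJ: "\<And>t j. T0 \<le> t \<Longrightarrow> J0 \<le> real_of_int \<bar>j\<bar> \<Longrightarrow> real_of_int \<bar>j\<bar> \<le> c * t \<Longrightarrow> V \<le> I t j"
    using spread[OF V(1,2) c] by blast
  define F where "F = {j::int. real_of_int \<bar>j\<bar> < max R J0}"
  have finF: "finite F"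
  proof -
    have "F \<subseteq> {-\<lceil>max R J0\<rceil> .. \<lceil>max R J0\<rceil>}" unfolding F_def by (auto simp: abs_less_iff) linarith+
    thus ?thesis by (rule finite_subset) simp
  qed
  have evF: "\<forall>\<^sub>F t in at_top. \<forall>j\<in>F. Iinf j - e \<le> I t j"
    using finF by (rule eventually_ball_finite) (use I_conv e in auto)
  have evT: "\<forall>\<^sub>F t in at_top. max T0 0 \<le> t" by (rule eventually_ge_at_top)
  show "\<forall>\<^sub>F t in at_top. \<forall>j\<in>{j. real_of_int \<bar>j\<bar> \<le> c * t}. \<bar>I t j - Iinf j\<bar> \<le> e"
    using evF evT
  proof eventually_elim
    case (elim t)
    show ?case
    proof
      fix j assume j: "j \<in> {j. real_of_int \<bar>j\<bar> \<le> c * t}"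
      have t0: "0 \<le> t" "T0 \<le> t" using elim by auto
      have up: "I t j \<le> Iinf j" using I_le_Iinf t0 by auto
      have "Iinf j - e \<le> I t j"
      proof (cases "j \<in> F")
        case True thus ?thesis using elim by auto
      next
        case False
        hence jR: "R \<le> real_of_int \<bar>j\<bar>" "J0 \<le> real_of_int \<bar>j\<bar>" unfolding F_def by auto
        have "V \<le> I t j" using TJ[OF t0(2) jR(2)] j by auto
        moreover have "Iinf j \<le> vs + e / 2" using R[OF jR(1)] by simp
        ultimately show ?thesis using V by linarith
      qed
      thus "\<bar>I t j - Iinf j\<bar> \<le> e" using up by auto
    qed
  qed
qed

end

theorem theorem3:
  fixes s0 \<tau> \<eta> lam :: real
    and I0 :: "int \<Rightarrow> real"
    and Iinf :: "int \<Rightarrow> real"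
    and I :: "real \<Rightarrow> int \<Rightarrow> real"
  assumes s0: "0 < s0" "s0 < 1"
    and pos: "0 < \<tau>" "0 < \<eta>" "0 < lam"
    and I0_fin: "finite {j. I0 j \<noteq> 0}"
    and I0_range: "\<And>j. 0 \<le> I0 j \<and> I0 j < 1"
    and I0_nz: "\<exists>j. 0 < I0 j"
    and R0_gt: "R0 s0 \<tau> \<eta> > 1"
    and Iinf_pos: "\<And>j. 0 < Iinf j"
    and Iinf_bdd: "bounded (range Iinf)"
    and Iinf_eq: "\<And>j. 0 = epi_f s0 \<tau> \<eta> (Iinf j) + I0 j + lam * dlap Iinf j"
    and I_cont: "\<And>j. continuous_on {0..} (\<lambda>t. I t j)"
    and I_ode: "\<And>j t. t > 0 \<Longrightarrow>
        ((\<lambda>s. I s j) has_real_derivative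
           (epi_f s0 \<tau> \<eta> (I t j) + I0 j + lam * dlap (I t) j)) (at t)"
    and I_init: "\<And>j. I 0 j = 0"
    and I_bdd: "\<And>T. bounded {I t j |t j. 0 \<le> t \<and> t \<le> T}"
  shows "(\<forall>c. 0 < c \<and> c < c_star s0 \<tau> \<eta> lam \<longrightarrow>
            Limsup at_top (\<lambda>t. SUP j\<in>{j. real_of_int \<bar>j\<bar> \<le> c * t}. ereal \<bar>I t j - Iinf j\<bar>) = 0)
       \<and> (\<forall>c. c > c_star s0 \<tau> \<eta> lam \<longrightarrow>
            Limsup at_top (\<lambda>t. SUP j\<in>{j. real_of_int \<bar>j\<bar> \<ge> c * t}. ereal \<bar>I t j\<bar>) = 0)"
proof -
  interpret E: epi s0 \<tau> \<eta> lam I0 Iinf I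
    by (unfold_locales) (use assms in auto)
  show ?thesis using E.part1 E.part2 by blast
qed


end
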